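(* Let $G$ be a countable infinite discrete group, $X$ an infinite compact Hausdorff space and $\alpha: G\curvearrowright X$ a continuous action with paradoxical comparison. Then $f\oplus f\precsim f$ in $C(X)\rtimes_r G$ for every non-zero $f\in C(X)_+$.
   Context: Subequivalence: for closed $F$ and open $O$ in $X$, $F\prec O$ if there exist a finite open cover $\mathcal{U}$ of $F$ and $s_U\in G$ with the sets $s_UU$ pairwise disjoint subsets of $O$. Paradoxical comparison: for every nonempty open $O$ and closed $F\subset O$ there are disjoint nonempty open $O_1,O_2\subset O$ with $F\prec O_1$ and $F\prec O_2$. Cuntz subequivalence: for positive $a\in M_n(A)$, $b\in M_m(A)$, $a\precsim b$ means there is a sequence $r_k\in M_{m,n}(A)$ with $r_k^\ast b r_k\to a$; $a\oplus b=\mathrm{diag}(a,b)$. *)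

theory Defs
  imports "HOL-Algebra.Group" "HOL-Analysis.Analysis" "HOL-Library.Function_Algebras"
begin

definition group_action :: "('g,'b) monoid_scheme \<Rightarrow> ('g \<Rightarrow> 'x::topological_space \<Rightarrow> 'x) \<Rightarrow> bool" where
  "group_action G \<alpha> \<longleftrightarrow>
     (\<forall>g\<in>carrier G. continuous_on UNIV (\<alpha> g)) \<and>
     (\<forall>x. \<alpha> \<one>\<^bsub>G\<^esub> x = x) \<and>
     (\<forall>g\<in>carrier G. \<forall>h\<in>carrier G. \<forall>x. \<alpha> (g \<otimes>\<^bsub>G\<^esub> h) x = \<alpha> g (\<alpha> h x))"

definition subequiv :: "('g,'b) monoid_scheme \<Rightarrow> ('g \<Rightarrow> 'x::topological_space \<Rightarrow> 'x) \<Rightarrow> 'x set \<Rightarrow> 'x set \<Rightarrow> bool" where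
  "subequiv G \<alpha> F W \<longleftrightarrow>
     (\<exists>UU s. finite UU \<and> (\<forall>U\<in>UU. open U) \<and> F \<subseteq> \<Union>UU \<and>
        (\<forall>U\<in>UU. s U \<in> carrier G \<and> \<alpha> (s U) ` U \<subseteq> W) \<and>
        (\<forall>U\<in>UU. \<forall>V\<in>UU. U \<noteq> V \<longrightarrow> \<alpha> (s U) ` U \<inter> \<alpha> (s V) ` V = {}))"

definition paradoxical_comparison :: "('g,'b) monoid_scheme \<Rightarrow> ('g \<Rightarrow> 'x::topological_space \<Rightarrow> 'x) \<Rightarrow> bool" where
  "paradoxical_comparison G \<alpha> \<longleftrightarrow>
     (\<forall>W F. open W \<and> W \<noteq> {} \<and> closed F \<and> F \<subseteq> W \<longrightarrow>
        (\<exists>O1 O2. open O1 \<and> open O2 \<and> O1 \<noteq> {} \<and> O2 \<noteq> {} \<and> O1 \<subseteq> W \<and> O2 \<subseteq> W \<and>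
           O1 \<inter> O2 = {} \<and> subequiv G \<alpha> F O1 \<and> subequiv G \<alpha> F O2))"

text \<open>Concrete model of the reduced crossed product C(X) \<rtimes>_r G: the regular representation
  induced from the faithful representation of C(X) on l2(X) (counting measure) by multiplication
  operators, acting on l2(G \<times> X).\<close>

definition l2 :: "('g,'b) monoid_scheme \<Rightarrow> ('g \<times> 'x \<Rightarrow> complex) set" where
  "l2 G = {\<xi>. (\<forall>h x. h \<notin> carrier G \<longrightarrow> \<xi> (h, x) = 0) \<and> (\<lambda>p. (cmod (\<xi> p))\<^sup>2) summable_on UNIV}"

definition l2norm :: "('g \<times> 'x \<Rightarrow> complex) \<Rightarrow> real" where
  "l2norm \<xi> = sqrt (infsum (\<lambda>p. (cmod (\<xi> p))\<^sup>2) UNIV)"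

definition l2inner :: "('g \<times> 'x \<Rightarrow> complex) \<Rightarrow> ('g \<times> 'x \<Rightarrow> complex) \<Rightarrow> complex" where
  "l2inner \<xi> \<eta> = infsum (\<lambda>p. \<xi> p * cnj (\<eta> p)) UNIV"

definition mult_op :: "('g,'b) monoid_scheme \<Rightarrow> ('g \<Rightarrow> 'x \<Rightarrow> 'x) \<Rightarrow> ('x \<Rightarrow> complex)
    \<Rightarrow> ('g \<times> 'x \<Rightarrow> complex) \<Rightarrow> ('g \<times> 'x \<Rightarrow> complex)" where
  "mult_op G \<alpha> f \<xi> = (\<lambda>(h, x). if h \<in> carrier G then f (\<alpha> h x) * \<xi> (h, x) else 0)"

definition shift_op :: "('g,'b) monoid_scheme \<Rightarrow> 'g
    \<Rightarrow> ('g \<times> 'x \<Rightarrow> complex) \<Rightarrow> ('g \<times> 'x \<Rightarrow> complex)" where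
  "shift_op G g \<xi> = (\<lambda>(h, x). if h \<in> carrier G then \<xi> (inv\<^bsub>G\<^esub> g \<otimes>\<^bsub>G\<^esub> h, x) else 0)"

definition finite_sum_ops :: "('g,'b) monoid_scheme \<Rightarrow> ('g \<Rightarrow> 'x::topological_space \<Rightarrow> 'x)
    \<Rightarrow> (('g \<times> 'x \<Rightarrow> complex) \<Rightarrow> ('g \<times> 'x \<Rightarrow> complex)) set" where
  "finite_sum_ops G \<alpha> = {T. \<exists>S c. finite S \<and> S \<subseteq> carrier G \<and>
      (\<forall>g\<in>S. continuous_on UNIV (c g)) \<and>
      T = (\<lambda>\<xi>. \<Sum>g\<in>S. mult_op G \<alpha> (c g) (shift_op G g \<xi>))}"

definition op_norm_le :: "('g,'b) monoid_scheme \<Rightarrow> (('g \<times> 'x \<Rightarrow> complex) \<Rightarrow> ('g \<times> 'x \<Rightarrow> complex)) \<Rightarrow> real \<Rightarrow> bool" where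
  "op_norm_le G T e \<longleftrightarrow> (\<forall>\<xi>\<in>l2 G. l2norm \<xi> \<le> 1 \<longrightarrow> l2norm (T \<xi>) \<le> e)"

definition crossed_product :: "('g,'b) monoid_scheme \<Rightarrow> ('g \<Rightarrow> 'x::topological_space \<Rightarrow> 'x)
    \<Rightarrow> (('g \<times> 'x \<Rightarrow> complex) \<Rightarrow> ('g \<times> 'x \<Rightarrow> complex)) set" where
  "crossed_product G \<alpha> = {T. (\<forall>\<xi>\<in>l2 G. T \<xi> \<in> l2 G) \<and>
      (\<forall>\<epsilon>>0. \<exists>S\<in>finite_sum_ops G \<alpha>. op_norm_le G (\<lambda>\<xi>. T \<xi> - S \<xi>) \<epsilon>)}"

definition is_adjoint :: "('g,'b) monoid_scheme \<Rightarrow> (('g \<times> 'x \<Rightarrow> complex) \<Rightarrow> ('g \<times> 'x \<Rightarrow> complex))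
    \<Rightarrow> (('g \<times> 'x \<Rightarrow> complex) \<Rightarrow> ('g \<times> 'x \<Rightarrow> complex)) \<Rightarrow> bool" where
  "is_adjoint G T T' \<longleftrightarrow> (\<forall>\<eta>\<in>l2 G. T' \<eta> \<in> l2 G) \<and>
      (\<forall>\<xi>\<in>l2 G. \<forall>\<eta>\<in>l2 G. l2inner (T \<xi>) \<eta> = l2inner \<xi> (T' \<eta>))"

definition m2_norm_le :: "('g,'b) monoid_scheme
    \<Rightarrow> (('g \<times> 'x \<Rightarrow> complex) \<Rightarrow> ('g \<times> 'x \<Rightarrow> complex)) \<Rightarrow> (('g \<times> 'x \<Rightarrow> complex) \<Rightarrow> ('g \<times> 'x \<Rightarrow> complex))
    \<Rightarrow> (('g \<times> 'x \<Rightarrow> complex) \<Rightarrow> ('g \<times> 'x \<Rightarrow> complex)) \<Rightarrow> (('g \<times> 'x \<Rightarrow> complex) \<Rightarrow> ('g \<times> 'x \<Rightarrow> complex))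
    \<Rightarrow> real \<Rightarrow> bool" where
  "m2_norm_le G a11 a12 a21 a22 e \<longleftrightarrow>
     (\<forall>\<xi>1\<in>l2 G. \<forall>\<xi>2\<in>l2 G. (l2norm \<xi>1)\<^sup>2 + (l2norm \<xi>2)\<^sup>2 \<le> 1 \<longrightarrow>
        sqrt ((l2norm (a11 \<xi>1 + a12 \<xi>2))\<^sup>2 + (l2norm (a21 \<xi>1 + a22 \<xi>2))\<^sup>2) \<le> e)"

text \<open>Cuntz subequivalence a \<oplus> a \<precsim> b for a, b in the crossed product (a \<oplus> a \<in> M_2, b \<in> M_1):
  there are r_k = (r1_k, r2_k) \<in> M_{1,2}(A) with r_k^* b r_k \<rightarrow> diag(a,a) in norm.\<close>
definition cuntz_diag2_below :: "('g,'b) monoid_scheme \<Rightarrow> ('g \<Rightarrow> 'x::topological_space \<Rightarrow> 'x)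
    \<Rightarrow> (('g \<times> 'x \<Rightarrow> complex) \<Rightarrow> ('g \<times> 'x \<Rightarrow> complex)) \<Rightarrow> (('g \<times> 'x \<Rightarrow> complex) \<Rightarrow> ('g \<times> 'x \<Rightarrow> complex)) \<Rightarrow> bool" where
  "cuntz_diag2_below G \<alpha> a b \<longleftrightarrow>
     (\<exists>r1 r2 r1' r2' :: nat \<Rightarrow> (('g \<times> 'x \<Rightarrow> complex) \<Rightarrow> ('g \<times> 'x \<Rightarrow> complex)).
        (\<forall>k. r1 k \<in> crossed_product G \<alpha> \<and> r2 k \<in> crossed_product G \<alpha> \<and>
             is_adjoint G (r1 k) (r1' k) \<and> is_adjoint G (r2 k) (r2' k)) \<and>
        (\<forall>\<epsilon>>0. \<exists>N. \<forall>k\<ge>N. m2_norm_le G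
            (\<lambda>\<xi>. r1' k (b (r1 k \<xi>)) - a \<xi>) (\<lambda>\<xi>. r1' k (b (r2 k \<xi>)))
            (\<lambda>\<xi>. r2' k (b (r1 k \<xi>))) (\<lambda>\<xi>. r2' k (b (r2 k \<xi>)) - a \<xi>) \<epsilon>))"

end

theory Submission imports Defs begin

lemma sum_fun_app: "(\<Sum>i\<in>I. F i) p = (\<Sum>i\<in>I. F i p)"
  by (induction I rule: infinite_finite_induct) auto

lemma gcancel1:
  assumes "group G" "g \<in> carrier G" "h \<in> carrier G"
  shows "inv\<^bsub>G\<^esub> g \<otimes>\<^bsub>G\<^esub> (g \<otimes>\<^bsub>G\<^esub> h) = h"
proof -
  have m: "monoid G" using assms(1) by (rule group.is_monoid)
  have "inv\<^bsub>G\<^esub> g \<otimes>\<^bsub>G\<^esub> (g \<otimes>\<^bsub>G\<^esub> h) = (inv\<^bsub>G\<^esub> g \<otimes>\<^bsub>G\<^esub> g) \<otimes>\<^bsub>G\<^esub> h"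
    using assms by (simp add: monoid.m_assoc[OF m] group.inv_closed)
  also have "\<dots> = h" using assms by (simp add: group.l_inv monoid.l_one[OF m])
  finally show ?thesis .
qed

lemma gcancel2:
  assumes "group G" "g \<in> carrier G" "h \<in> carrier G"
  shows "g \<otimes>\<^bsub>G\<^esub> (inv\<^bsub>G\<^esub> g \<otimes>\<^bsub>G\<^esub> h) = h"
proof -
  have m: "monoid G" using assms(1) by (rule group.is_monoid)
  have "g \<otimes>\<^bsub>G\<^esub> (inv\<^bsub>G\<^esub> g \<otimes>\<^bsub>G\<^esub> h) = (g \<otimes>\<^bsub>G\<^esub> inv\<^bsub>G\<^esub> g) \<otimes>\<^bsub>G\<^esub> h"
    using assms by (simp add: monoid.m_assoc[OF m] group.inv_closed)
  also have "\<dots> = h" using assms by (simp add: group.r_inv monoid.l_one[OF m])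
  finally show ?thesis .
qed

lemma has_sum_shift:
  assumes G: "group G" and g: "g \<in> carrier G"
    and F0: "\<And>h x. h \<notin> carrier G \<Longrightarrow> F (h, x) = 0"
  shows "((\<lambda>(h,x). if h \<in> carrier G then F (g \<otimes>\<^bsub>G\<^esub> h, x) else 0) has_sum a) UNIV
         \<longleftrightarrow> (F has_sum a) UNIV"
proof -
  have F0': "\<forall>p. p \<notin> carrier G \<times> UNIV \<longrightarrow> F p = 0" using F0 by auto
  have ig: "inv\<^bsub>G\<^esub> g \<in> carrier G" using G g by (rule group.inv_closed)
  have mc: "\<And>u v. u \<in> carrier G \<Longrightarrow> v \<in> carrier G \<Longrightarrow> u \<otimes>\<^bsub>G\<^esub> v \<in> carrier G"
    using G by (simp add: group.is_monoid monoid.m_closed)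
  have bij: "bij_betw (\<lambda>p. (g \<otimes>\<^bsub>G\<^esub> fst p, snd p)) (carrier G \<times> UNIV) (carrier G \<times> UNIV)"
  proof (rule bij_betw_byWitness[where f'="\<lambda>p. (inv\<^bsub>G\<^esub> g \<otimes>\<^bsub>G\<^esub> fst p, snd p)"])
    show "\<forall>a\<in>carrier G \<times> UNIV. (inv\<^bsub>G\<^esub> g \<otimes>\<^bsub>G\<^esub> fst (g \<otimes>\<^bsub>G\<^esub> fst a, snd a), snd (g \<otimes>\<^bsub>G\<^esub> fst a, snd a)) = a"
      using gcancel1[OF G g] by auto
    show "\<forall>a\<in>carrier G \<times> UNIV. (g \<otimes>\<^bsub>G\<^esub> fst (inv\<^bsub>G\<^esub> g \<otimes>\<^bsub>G\<^esub> fst a, snd a), snd (inv\<^bsub>G\<^esub> g \<otimes>\<^bsub>G\<^esub> fst a, snd a)) = a"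
      using gcancel2[OF G g] by auto
    show "(\<lambda>p. (g \<otimes>\<^bsub>G\<^esub> fst p, snd p)) ` (carrier G \<times> UNIV) \<subseteq> carrier G \<times> UNIV"
      using mc g by auto
    show "(\<lambda>p. (inv\<^bsub>G\<^esub> g \<otimes>\<^bsub>G\<^esub> fst p, snd p)) ` (carrier G \<times> UNIV) \<subseteq> carrier G \<times> UNIV"
      using mc ig by auto
  qed
  have "((\<lambda>(h,x). if h \<in> carrier G then F (g \<otimes>\<^bsub>G\<^esub> h, x) else 0) has_sum a) UNIV
        \<longleftrightarrow> ((\<lambda>p. F (g \<otimes>\<^bsub>G\<^esub> fst p, snd p)) has_sum a) (carrier G \<times> UNIV)"
    by (rule has_sum_cong_neutral) (auto split: prod.splits)
  also have "\<dots> \<longleftrightarrow> (F has_sum a) (carrier G \<times> UNIV)"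
    using has_sum_reindex_bij_betw[OF bij, of F a] by simp
  also have "\<dots> \<longleftrightarrow> (F has_sum a) UNIV"
    using F0' by (intro has_sum_cong_neutral) auto
  finally show ?thesis .
qed

lemma summable_shift:
  assumes G: "group G" and g: "g \<in> carrier G"
    and F0: "\<And>h x. h \<notin> carrier G \<Longrightarrow> F (h, x) = 0"
  shows "(\<lambda>(h,x). if h \<in> carrier G then F (g \<otimes>\<^bsub>G\<^esub> h, x) else 0) summable_on UNIV
         \<longleftrightarrow> F summable_on UNIV"
  unfolding summable_on_def using has_sum_shift[of G g F, OF assms] by blast

lemma infsum_shift:
  assumes G: "group G" and g: "g \<in> carrier G"
    and F0: "\<And>h x. h \<notin> carrier G \<Longrightarrow> F (h, x) = 0"
  shows "infsum (\<lambda>(h,x). if h \<in> carrier G then F (g \<otimes>\<^bsub>G\<^esub> h, x) else 0) UNIV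
         = infsum F UNIV"
proof (cases "F summable_on UNIV")
  case True
  then have "(F has_sum infsum F UNIV) UNIV" by simp
  then have "((\<lambda>(h,x). if h \<in> carrier G then F (g \<otimes>\<^bsub>G\<^esub> h, x) else 0) has_sum infsum F UNIV) UNIV"
    using has_sum_shift[of G g F "infsum F UNIV", OF assms] by blast
  then show ?thesis by (rule infsumI)
next
  case False
  moreover have "\<not> (\<lambda>(h,x). if h \<in> carrier G then F (g \<otimes>\<^bsub>G\<^esub> h, x) else 0) summable_on UNIV"
    using summable_shift[of G g F, OF assms] False by blast
  ultimately show ?thesis by (simp add: infsum_not_exists)
qed

lemma l2_zero[simp]: "(0 :: 'g \<times> 'x \<Rightarrow> complex) \<in> l2 G"
  by (simp add: l2_def)

lemma l2_add:
  assumes "a \<in> l2 G" "b \<in> l2 G" shows "a + b \<in> l2 G"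
proof -
  have s: "(\<lambda>p. 2 * (cmod (a p))\<^sup>2 + 2 * (cmod (b p))\<^sup>2) summable_on UNIV"
    using assms by (intro summable_on_add summable_on_cmult_right) (auto simp: l2_def)
  have "(\<lambda>p. (cmod ((a + b) p))\<^sup>2) summable_on UNIV"
  proof (rule summable_on_comparison_test[OF s])
    fix p
    have "cmod (a p + b p) \<le> cmod (a p) + cmod (b p)" by (rule norm_triangle_ineq)
    then have "(cmod (a p + b p))\<^sup>2 \<le> (cmod (a p) + cmod (b p))\<^sup>2"
      by (simp add: power_mono)
    also have "\<dots> \<le> 2 * (cmod (a p))\<^sup>2 + 2 * (cmod (b p))\<^sup>2"
    proof -
      have "(cmod (a p) + cmod (b p))\<^sup>2 + (cmod (a p) - cmod (b p))\<^sup>2 = 2 * (cmod (a p))\<^sup>2 + 2 * (cmod (b p))\<^sup>2"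
        by (simp add: power2_eq_square algebra_simps)
      moreover have "0 \<le> (cmod (a p) - cmod (b p))\<^sup>2" by simp
      ultimately show ?thesis by linarith
    qed
    finally show "(cmod ((a + b) p))\<^sup>2 \<le> 2 * (cmod (a p))\<^sup>2 + 2 * (cmod (b p))\<^sup>2" by simp
  qed simp
  with assms show ?thesis by (auto simp: l2_def)
qed

lemma l2_sum:
  assumes "\<And>i. i \<in> I \<Longrightarrow> F i \<in> l2 G" shows "(\<Sum>i\<in>I. F i) \<in> l2 G"
  using assms by (induction I rule: infinite_finite_induct) (auto intro: l2_add)

lemma l2_dom:
  assumes "\<xi> \<in> l2 G" and "\<And>p. cmod (\<eta> p) \<le> B * cmod (\<xi> p)"
    and "\<And>h x. h \<notin> carrier G \<Longrightarrow> \<eta> (h, x) = 0"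
  shows "\<eta> \<in> l2 G"
proof -
  have s: "(\<lambda>p. B\<^sup>2 * (cmod (\<xi> p))\<^sup>2) summable_on UNIV"
    using assms by (intro summable_on_cmult_right) (auto simp: l2_def)
  have "(\<lambda>p. (cmod (\<eta> p))\<^sup>2) summable_on UNIV"
  proof (rule summable_on_comparison_test[OF s])
    fix p
    have "(cmod (\<eta> p))\<^sup>2 \<le> (B * cmod (\<xi> p))\<^sup>2"
      using assms(2)[of p] by (simp add: power_mono)
    then show "(cmod (\<eta> p))\<^sup>2 \<le> B\<^sup>2 * (cmod (\<xi> p))\<^sup>2" by (simp add: power_mult_distrib)
  qed simp
  with assms show ?thesis by (auto simp: l2_def)
qed

definition wshift :: "('g,'b) monoid_scheme \<Rightarrow> 'g \<Rightarrow> ('g \<times> 'x \<Rightarrow> complex)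
   \<Rightarrow> ('g \<times> 'x \<Rightarrow> complex) \<Rightarrow> ('g \<times> 'x \<Rightarrow> complex)" where
  "wshift G g w \<xi> = (\<lambda>(h,x). if h \<in> carrier G then w (h, x) * \<xi> (g \<otimes>\<^bsub>G\<^esub> h, x) else 0)"

lemma wshift_l2:
  assumes G: "group G" and g: "g \<in> carrier G" and \<xi>: "\<xi> \<in> l2 G"
    and B: "\<And>p. cmod (w p) \<le> B"
  shows "wshift G g w \<xi> \<in> l2 G"
proof -
  let ?s = "(\<lambda>(h,x). if h \<in> carrier G then \<xi> (g \<otimes>\<^bsub>G\<^esub> h, x) else 0)"
  let ?F = "\<lambda>p. (cmod (\<xi> p))\<^sup>2"
  have F0: "\<And>h x. h \<notin> carrier G \<Longrightarrow> ?F (h,x) = 0" using \<xi> by (simp add: l2_def)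
  have "(\<lambda>(h,x). if h \<in> carrier G then ?F (g \<otimes>\<^bsub>G\<^esub> h, x) else 0) summable_on UNIV"
    using summable_shift[of G g ?F, OF G g F0] \<xi> by (simp add: l2_def)
  moreover have "(\<lambda>(h,x). if h \<in> carrier G then ?F (g \<otimes>\<^bsub>G\<^esub> h, x) else 0) = (\<lambda>p. (cmod (?s p))\<^sup>2)"
    by (rule ext) (simp split: prod.splits)
  ultimately have sm: "(\<lambda>p. (cmod (?s p))\<^sup>2) summable_on UNIV" by simp
  have s2: "?s \<in> l2 G" unfolding l2_def using sm by simp
  have B0: "B \<ge> 0" using norm_ge_zero[of "w undefined"] B[of undefined] by linarith
  have bd: "cmod (wshift G g w \<xi> p) \<le> B * cmod (?s p)" for p
  proof -
    obtain h x where p: "p = (h, x)" by (cases p)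
    show ?thesis
    proof (cases "h \<in> carrier G")
      case True
      then show ?thesis unfolding p wshift_def
        by (simp add: norm_mult mult_right_mono[OF B])
    qed (simp add: p wshift_def)
  qed
  have z: "\<And>h x. h \<notin> carrier G \<Longrightarrow> wshift G g w \<xi> (h, x) = 0" by (simp add: wshift_def)
  show ?thesis by (rule l2_dom[OF s2 bd z])
qed


lemma l2_prod_summable:
  assumes a: "a \<in> l2 G" and b: "b \<in> l2 G"
  shows "(\<lambda>p. a p * cnj (b p)) summable_on UNIV"
proof (rule abs_summable_summable)
  have s: "(\<lambda>p. (cmod (a p))\<^sup>2 + (cmod (b p))\<^sup>2) summable_on UNIV"
    using a b by (intro summable_on_add) (auto simp: l2_def)
  show "(\<lambda>p. norm (a p * cnj (b p))) summable_on UNIV"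
  proof (rule summable_on_comparison_test[OF s])
    fix p
    have "0 \<le> (cmod (a p) - cmod (b p))\<^sup>2" by simp
    then have "cmod (a p) * cmod (b p) \<le> (cmod (a p))\<^sup>2 + (cmod (b p))\<^sup>2"
      by (simp add: power2_eq_square algebra_simps)
         (smt (verit) mult_nonneg_nonneg norm_ge_zero)
    then show "norm (a p * cnj (b p)) \<le> (cmod (a p))\<^sup>2 + (cmod (b p))\<^sup>2"
      by (simp add: norm_mult)
  qed simp
qed

lemma l2inner_add_left:
  assumes "a \<in> l2 G" "b \<in> l2 G" "c \<in> l2 G"
  shows "l2inner (a + b) c = l2inner a c + l2inner b c"
proof -
  have "l2inner (a + b) c = infsum (\<lambda>p. a p * cnj (c p) + b p * cnj (c p)) UNIV"
    unfolding l2inner_def by (simp add: distrib_right)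
  also have "\<dots> = l2inner a c + l2inner b c"
    unfolding l2inner_def
    by (rule infsum_add[OF l2_prod_summable[OF assms(1,3)] l2_prod_summable[OF assms(2,3)]])
  finally show ?thesis .
qed

lemma l2inner_add_right:
  assumes "a \<in> l2 G" "b \<in> l2 G" "c \<in> l2 G"
  shows "l2inner a (b + c) = l2inner a b + l2inner a c"
proof -
  have "l2inner a (b + c) = infsum (\<lambda>p. a p * cnj (b p) + a p * cnj (c p)) UNIV"
    unfolding l2inner_def by (simp add: distrib_left)
  also have "\<dots> = l2inner a b + l2inner a c"
    unfolding l2inner_def
    by (rule infsum_add[OF l2_prod_summable[OF assms(1,2)] l2_prod_summable[OF assms(1,3)]])
  finally show ?thesis .
qed

lemma l2inner_zero_left: "l2inner 0 c = 0"
  by (simp add: l2inner_def)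

lemma l2inner_zero_right: "l2inner a 0 = 0"
  by (simp add: l2inner_def)

lemma l2inner_sum_left:
  assumes "\<And>i. i \<in> I \<Longrightarrow> F i \<in> l2 G" "c \<in> l2 G"
  shows "l2inner (\<Sum>i\<in>I. F i) c = (\<Sum>i\<in>I. l2inner (F i) c)"
  using assms
proof (induction I rule: infinite_finite_induct)
  case (insert i I)
  have "l2inner (\<Sum>i\<in>insert i I. F i) c = l2inner (F i + (\<Sum>i\<in>I. F i)) c"
    using insert.hyps by simp
  also have "\<dots> = l2inner (F i) c + l2inner (\<Sum>i\<in>I. F i) c"
    by (rule l2inner_add_left) (use insert.prems in \<open>auto intro: l2_sum\<close>)
  also have "\<dots> = l2inner (F i) c + (\<Sum>i\<in>I. l2inner (F i) c)"
    using insert.IH insert.prems by simp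
  also have "\<dots> = (\<Sum>i\<in>insert i I. l2inner (F i) c)" using insert.hyps by simp
  finally show ?case .
qed (simp_all add: l2inner_zero_left)

lemma l2inner_sum_right:
  assumes "\<And>i. i \<in> I \<Longrightarrow> F i \<in> l2 G" "c \<in> l2 G"
  shows "l2inner c (\<Sum>i\<in>I. F i) = (\<Sum>i\<in>I. l2inner c (F i))"
  using assms
proof (induction I rule: infinite_finite_induct)
  case (insert i I)
  have "l2inner c (\<Sum>i\<in>insert i I. F i) = l2inner c (F i + (\<Sum>i\<in>I. F i))"
    using insert.hyps by simp
  also have "\<dots> = l2inner c (F i) + l2inner c (\<Sum>i\<in>I. F i)"
    by (rule l2inner_add_right) (use insert.prems in \<open>auto intro: l2_sum\<close>)
  also have "\<dots> = l2inner c (F i) + (\<Sum>i\<in>I. l2inner c (F i))"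
    using insert.IH insert.prems by simp
  also have "\<dots> = (\<Sum>i\<in>insert i I. l2inner c (F i))" using insert.hyps by simp
  finally show ?case .
qed (simp_all add: l2inner_zero_right)

lemma wshift_cong:
  assumes "\<And>h x. h \<in> carrier G \<Longrightarrow> w (h, x) = w' (h, x)"
  shows "wshift G g w = wshift G g w'"
  unfolding wshift_def using assms by (intro ext) (simp split: prod.splits)

lemma wshift_adj:
  assumes G: "group G" and g: "g \<in> carrier G" and \<xi>: "\<xi> \<in> l2 G" and \<eta>: "\<eta> \<in> l2 G"
  shows "l2inner (wshift G g w \<xi>) \<eta>
       = l2inner \<xi> (wshift G (inv\<^bsub>G\<^esub> g) (\<lambda>(h,x). cnj (w (inv\<^bsub>G\<^esub> g \<otimes>\<^bsub>G\<^esub> h, x))) \<eta>)"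
proof -
  let ?ig = "inv\<^bsub>G\<^esub> g"
  have ig: "?ig \<in> carrier G" using G g by (rule group.inv_closed)
  have mc: "\<And>u v. u \<in> carrier G \<Longrightarrow> v \<in> carrier G \<Longrightarrow> u \<otimes>\<^bsub>G\<^esub> v \<in> carrier G"
    using G by (simp add: group.is_monoid monoid.m_closed)
  let ?P = "\<lambda>p. \<xi> p * cnj (wshift G ?ig (\<lambda>(h,x). cnj (w (?ig \<otimes>\<^bsub>G\<^esub> h, x))) \<eta> p)"
  have P0: "\<And>h x. h \<notin> carrier G \<Longrightarrow> ?P (h, x) = 0" by (simp add: wshift_def)
  have eq: "(\<lambda>p. wshift G g w \<xi> p * cnj (\<eta> p))
      = (\<lambda>(h,x). if h \<in> carrier G then ?P (g \<otimes>\<^bsub>G\<^esub> h, x) else 0)"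
  proof (rule ext)
    fix p :: "'a \<times> 'c"
    obtain h x where p: "p = (h, x)" by (cases p)
    show "wshift G g w \<xi> p * cnj (\<eta> p) = (\<lambda>(h,x). if h \<in> carrier G then ?P (g \<otimes>\<^bsub>G\<^esub> h, x) else 0) p"
    proof (cases "h \<in> carrier G")
      case True
      have gh: "g \<otimes>\<^bsub>G\<^esub> h \<in> carrier G" using mc g True by blast
      have c1: "?ig \<otimes>\<^bsub>G\<^esub> (g \<otimes>\<^bsub>G\<^esub> h) = h" using gcancel1[OF G g True] .
      show ?thesis unfolding p wshift_def using True gh c1 by simp
    qed (simp add: p wshift_def)
  qed
  have "l2inner (wshift G g w \<xi>) \<eta> = infsum (\<lambda>(h,x). if h \<in> carrier G then ?P (g \<otimes>\<^bsub>G\<^esub> h, x) else 0) UNIV"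
    unfolding l2inner_def eq ..
  also have "\<dots> = infsum ?P UNIV"
    by (rule infsum_shift[of G g ?P, OF G g P0])
  finally show ?thesis unfolding l2inner_def .
qed


lemma cont_bounded:
  fixes f :: "'x::topological_space \<Rightarrow> real"
  assumes "compact (UNIV :: 'x set)" "continuous_on UNIV f"
  shows "\<exists>B. \<forall>z. \<bar>f z\<bar> \<le> B"
proof -
  have "compact (f ` UNIV)" by (rule compact_continuous_image[OF assms(2,1)])
  then have "bounded (f ` UNIV)" by (rule compact_imp_bounded)
  then show ?thesis unfolding bounded_real by auto
qed

lemma act_mult:
  assumes "group_action G \<alpha>" "g \<in> carrier G" "h \<in> carrier G"
  shows "\<alpha> (g \<otimes>\<^bsub>G\<^esub> h) x = \<alpha> g (\<alpha> h x)"
  using assms unfolding group_action_def by blast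

lemma act_one:
  assumes "group_action G \<alpha>" shows "\<alpha> \<one>\<^bsub>G\<^esub> x = x"
  using assms unfolding group_action_def by blast

lemma act_cont:
  assumes "group_action G \<alpha>" "g \<in> carrier G"
  shows "continuous_on UNIV (\<alpha> g)"
  using assms unfolding group_action_def by blast

lemma act_inv1:
  assumes G: "group G" and a: "group_action G \<alpha>" and g: "g \<in> carrier G"
  shows "\<alpha> (inv\<^bsub>G\<^esub> g) (\<alpha> g x) = x"
proof -
  have ig: "inv\<^bsub>G\<^esub> g \<in> carrier G" using G g by (rule group.inv_closed)
  have "\<alpha> (inv\<^bsub>G\<^esub> g) (\<alpha> g x) = \<alpha> (inv\<^bsub>G\<^esub> g \<otimes>\<^bsub>G\<^esub> g) x"
    using act_mult[OF a ig g] by simp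
  also have "inv\<^bsub>G\<^esub> g \<otimes>\<^bsub>G\<^esub> g = \<one>\<^bsub>G\<^esub>" using G g by (rule group.l_inv)
  finally show ?thesis using act_one[OF a] by simp
qed

lemma act_inv2:
  assumes G: "group G" and a: "group_action G \<alpha>" and g: "g \<in> carrier G"
  shows "\<alpha> g (\<alpha> (inv\<^bsub>G\<^esub> g) x) = x"
proof -
  have ig: "inv\<^bsub>G\<^esub> g \<in> carrier G" using G g by (rule group.inv_closed)
  have "\<alpha> g (\<alpha> (inv\<^bsub>G\<^esub> g) x) = \<alpha> (g \<otimes>\<^bsub>G\<^esub> inv\<^bsub>G\<^esub> g) x"
    using act_mult[OF a g ig] by simp
  also have "g \<otimes>\<^bsub>G\<^esub> inv\<^bsub>G\<^esub> g = \<one>\<^bsub>G\<^esub>" using G g by (rule group.r_inv)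
  finally show ?thesis using act_one[OF a] by simp
qed

definition Rop :: "('g,'b) monoid_scheme \<Rightarrow> ('g \<Rightarrow> 'x \<Rightarrow> 'x) \<Rightarrow> 'i set \<Rightarrow> ('i \<Rightarrow> 'g)
   \<Rightarrow> ('i \<Rightarrow> 'x \<Rightarrow> real) \<Rightarrow> ('g \<times> 'x \<Rightarrow> complex) \<Rightarrow> ('g \<times> 'x \<Rightarrow> complex)" where
  "Rop G \<alpha> I s c \<xi> = (\<Sum>U\<in>I. wshift G (inv\<^bsub>G\<^esub> (s U))
       (\<lambda>(h,x). complex_of_real (c U (\<alpha> (inv\<^bsub>G\<^esub> (s U)) (\<alpha> h x)))) \<xi>)"

definition Radj :: "('g,'b) monoid_scheme \<Rightarrow> ('g \<Rightarrow> 'x \<Rightarrow> 'x) \<Rightarrow> 'i set \<Rightarrow> ('i \<Rightarrow> 'g)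
   \<Rightarrow> ('i \<Rightarrow> 'x \<Rightarrow> real) \<Rightarrow> ('g \<times> 'x \<Rightarrow> complex) \<Rightarrow> ('g \<times> 'x \<Rightarrow> complex)" where
  "Radj G \<alpha> I s c \<eta> = (\<Sum>U\<in>I. wshift G (s U) (\<lambda>(h,x). complex_of_real (c U (\<alpha> h x))) \<eta>)"

lemma Rop_l2:
  assumes G: "group G" and s: "\<And>U. U \<in> I \<Longrightarrow> s U \<in> carrier G"
    and B: "\<And>U. U \<in> I \<Longrightarrow> \<exists>B. \<forall>z. \<bar>c U z\<bar> \<le> B" and \<xi>: "\<xi> \<in> l2 G"
  shows "Rop G \<alpha> I s c \<xi> \<in> l2 G"
  unfolding Rop_def
proof (rule l2_sum)
  fix U assume U: "U \<in> I"
  obtain b where b: "\<forall>z. \<bar>c U z\<bar> \<le> b" using B[OF U] by blast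
  show "wshift G (inv\<^bsub>G\<^esub> (s U)) (\<lambda>(h,x). complex_of_real (c U (\<alpha> (inv\<^bsub>G\<^esub> (s U)) (\<alpha> h x)))) \<xi> \<in> l2 G"
    by (rule wshift_l2[OF G group.inv_closed[OF G s[OF U]] \<xi>, where B=b]) (auto simp: b split: prod.splits)
qed

lemma Radj_l2:
  assumes G: "group G" and s: "\<And>U. U \<in> I \<Longrightarrow> s U \<in> carrier G"
    and B: "\<And>U. U \<in> I \<Longrightarrow> \<exists>B. \<forall>z. \<bar>c U z\<bar> \<le> B" and \<xi>: "\<xi> \<in> l2 G"
  shows "Radj G \<alpha> I s c \<xi> \<in> l2 G"
  unfolding Radj_def
proof (rule l2_sum)
  fix U assume U: "U \<in> I"
  obtain b where b: "\<forall>z. \<bar>c U z\<bar> \<le> b" using B[OF U] by blast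
  show "wshift G (s U) (\<lambda>(h,x). complex_of_real (c U (\<alpha> h x))) \<xi> \<in> l2 G"
    by (rule wshift_l2[OF G s[OF U] \<xi>, where B=b]) (auto simp: b split: prod.splits)
qed

lemma Rop_adj:
  fixes G :: "('g,'b) monoid_scheme" and \<alpha> :: "'g \<Rightarrow> 'x::topological_space \<Rightarrow> 'x"
  assumes G: "group G" and a: "group_action G \<alpha>" and s: "\<And>U. U \<in> I \<Longrightarrow> s U \<in> carrier G"
    and B: "\<And>U. U \<in> I \<Longrightarrow> \<exists>B. \<forall>z. \<bar>c U z\<bar> \<le> B"
  shows "is_adjoint G (Rop G \<alpha> I s c) (Radj G \<alpha> I s c)"
  unfolding is_adjoint_def
proof (intro conjI ballI)
  fix \<eta> :: "'g \<times> 'x \<Rightarrow> complex" assume e: "\<eta> \<in> l2 G"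
  show "Radj G \<alpha> I s c \<eta> \<in> l2 G" apply (rule Radj_l2) using G s B e by simp_all
next
  fix \<xi> \<eta> :: "'g \<times> 'x \<Rightarrow> complex" assume \<xi>: "\<xi> \<in> l2 G" and \<eta>: "\<eta> \<in> l2 G"
  let ?w = "\<lambda>U. (\<lambda>(h,x). complex_of_real (c U (\<alpha> (inv\<^bsub>G\<^esub> (s U)) (\<alpha> h x))))"
  let ?w' = "\<lambda>U. (\<lambda>(h,x). complex_of_real (c U (\<alpha> h x)))"
  have l2w: "wshift G (inv\<^bsub>G\<^esub> (s U)) (?w U) \<xi> \<in> l2 G" if U: "U \<in> I" for U
  proof -
    obtain b where b: "\<forall>z. \<bar>c U z\<bar> \<le> b" using B[OF U] by blast
    show ?thesis
      by (rule wshift_l2[OF G group.inv_closed[OF G s[OF U]] \<xi>, where B=b]) (auto simp: b split: prod.splits)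
  qed
  have l2w': "wshift G (s U) (?w' U) \<eta> \<in> l2 G" if U: "U \<in> I" for U
  proof -
    obtain b where b: "\<forall>z. \<bar>c U z\<bar> \<le> b" using B[OF U] by blast
    show ?thesis
      by (rule wshift_l2[OF G s[OF U] \<eta>, where B=b]) (auto simp: b split: prod.splits)
  qed
  have trm: "l2inner (wshift G (inv\<^bsub>G\<^esub> (s U)) (?w U) \<xi>) \<eta> = l2inner \<xi> (wshift G (s U) (?w' U) \<eta>)"
    if U: "U \<in> I" for U
  proof -
    have sU: "s U \<in> carrier G" using s[OF U] .
    have isU: "inv\<^bsub>G\<^esub> (s U) \<in> carrier G" using G sU by (rule group.inv_closed)
    have ii: "inv\<^bsub>G\<^esub> (inv\<^bsub>G\<^esub> (s U)) = s U" using G sU by (rule group.inv_inv)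
    have cong: "wshift G (s U) (\<lambda>(h,x). cnj (?w U (inv\<^bsub>G\<^esub> (inv\<^bsub>G\<^esub> (s U)) \<otimes>\<^bsub>G\<^esub> h, x))) = wshift G (s U) (?w' U)"
    proof (rule wshift_cong)
      fix h x assume h: "h \<in> carrier G"
      have "\<alpha> (inv\<^bsub>G\<^esub> (s U)) (\<alpha> (s U \<otimes>\<^bsub>G\<^esub> h) x) = \<alpha> h x"
        using act_mult[OF a sU h] act_inv1[OF G a sU] by simp
      then show "(\<lambda>(h,x). cnj (?w U (inv\<^bsub>G\<^esub> (inv\<^bsub>G\<^esub> (s U)) \<otimes>\<^bsub>G\<^esub> h, x))) (h, x) = ?w' U (h, x)"
        by (simp add: ii)
    qed
    show ?thesis using wshift_adj[OF G isU \<xi> \<eta>, of "?w U"] cong ii by simp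
  qed
  have "l2inner (Rop G \<alpha> I s c \<xi>) \<eta> = (\<Sum>U\<in>I. l2inner (wshift G (inv\<^bsub>G\<^esub> (s U)) (?w U) \<xi>) \<eta>)"
    unfolding Rop_def by (rule l2inner_sum_left[OF l2w \<eta>])
  also have "\<dots> = (\<Sum>U\<in>I. l2inner \<xi> (wshift G (s U) (?w' U) \<eta>))"
    by (rule sum.cong) (simp_all add: trm)
  also have "\<dots> = l2inner \<xi> (Radj G \<alpha> I s c \<eta>)"
    unfolding Radj_def by (rule l2inner_sum_right[OF l2w' \<xi>, symmetric])
  finally show "l2inner (Rop G \<alpha> I s c \<xi>) \<eta> = l2inner \<xi> (Radj G \<alpha> I s c \<eta>)" .
qed


lemma mult_op_sum:
  "mult_op G \<alpha> (\<lambda>y. \<Sum>i\<in>J. f i y) \<eta> = (\<Sum>i\<in>J. mult_op G \<alpha> (f i) \<eta>)"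
proof (rule ext)
  fix p :: "'a \<times> 'b"
  obtain h x where p: "p = (h, x)" by (cases p)
  show "mult_op G \<alpha> (\<lambda>y. \<Sum>i\<in>J. f i y) \<eta> p = (\<Sum>i\<in>J. mult_op G \<alpha> (f i) \<eta>) p"
    unfolding sum_fun_app p mult_op_def by (simp add: sum_distrib_right)
qed

lemma wshift_mult_shift:
  "wshift G (inv\<^bsub>G\<^esub> g) (\<lambda>(h,x). f (\<alpha> h x)) \<xi> = mult_op G \<alpha> f (shift_op G g \<xi>)"
proof (rule ext)
  fix p :: "'a \<times> 'b"
  obtain h x where p: "p = (h, x)" by (cases p)
  show "wshift G (inv\<^bsub>G\<^esub> g) (\<lambda>(h,x). f (\<alpha> h x)) \<xi> p = mult_op G \<alpha> f (shift_op G g \<xi>) p"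
    unfolding p mult_op_def shift_op_def wshift_def by simp
qed

lemma l2norm_zero: "l2norm 0 = 0"
  by (simp add: l2norm_def)

lemma Rop_cp:
  fixes G :: "('g,'b) monoid_scheme" and \<alpha> :: "'g \<Rightarrow> 'x::topological_space \<Rightarrow> 'x"
  assumes G: "group G" and a: "group_action G \<alpha>" and fin: "finite I"
    and s: "\<And>U. U \<in> I \<Longrightarrow> s U \<in> carrier G"
    and c: "\<And>U. U \<in> I \<Longrightarrow> continuous_on UNIV (c U)"
    and K: "compact (UNIV :: 'x set)"
  shows "Rop G \<alpha> I s c \<in> crossed_product G \<alpha>"
proof -
  have B: "\<exists>B. \<forall>z. \<bar>c U z\<bar> \<le> B" if "U \<in> I" for U
    using cont_bounded[OF K c[OF that]] .
  define C where "C g = (\<lambda>y. \<Sum>U\<in>{U \<in> I. s U = g}. complex_of_real (c U (\<alpha> (inv\<^bsub>G\<^esub> g) y)))" for g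
  have fs: "Rop G \<alpha> I s c = (\<lambda>\<xi>. \<Sum>g\<in>s ` I. mult_op G \<alpha> (C g) (shift_op G g \<xi>))"
  proof (rule ext)
    fix \<xi> :: "'g \<times> 'x \<Rightarrow> complex"
    have "Rop G \<alpha> I s c \<xi> = (\<Sum>U\<in>I. mult_op G \<alpha> (\<lambda>y. complex_of_real (c U (\<alpha> (inv\<^bsub>G\<^esub> (s U)) y))) (shift_op G (s U) \<xi>))"
      unfolding Rop_def by (rule sum.cong) (simp_all add: wshift_mult_shift[symmetric])
    also have "\<dots> = (\<Sum>g\<in>s ` I. \<Sum>U\<in>{U \<in> I. s U = g}. mult_op G \<alpha> (\<lambda>y. complex_of_real (c U (\<alpha> (inv\<^bsub>G\<^esub> (s U)) y))) (shift_op G (s U) \<xi>))"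
      by (rule sum.image_gen[OF fin])
    also have "\<dots> = (\<Sum>g\<in>s ` I. \<Sum>U\<in>{U \<in> I. s U = g}. mult_op G \<alpha> (\<lambda>y. complex_of_real (c U (\<alpha> (inv\<^bsub>G\<^esub> g) y))) (shift_op G g \<xi>))"
      by (intro sum.cong refl) auto
    also have "\<dots> = (\<Sum>g\<in>s ` I. mult_op G \<alpha> (C g) (shift_op G g \<xi>))"
      unfolding C_def by (intro sum.cong refl mult_op_sum[symmetric])
    finally show "Rop G \<alpha> I s c \<xi> = (\<Sum>g\<in>s ` I. mult_op G \<alpha> (C g) (shift_op G g \<xi>))" .
  qed
  have Cc: "continuous_on UNIV (C g)" if g: "g \<in> s ` I" for g
  proof -
    have gG: "g \<in> carrier G" using g s by blast
    have ig: "inv\<^bsub>G\<^esub> g \<in> carrier G" using G gG by (rule group.inv_closed)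
    show ?thesis unfolding C_def
    proof (intro continuous_on_sum continuous_on_of_real)
      fix U assume "U \<in> {U \<in> I. s U = g}"
      then have U: "U \<in> I" by simp
      show "continuous_on UNIV (\<lambda>y. c U (\<alpha> (inv\<^bsub>G\<^esub> g) y))"
        by (rule continuous_on_compose2[OF c[OF U] act_cont[OF a ig]]) simp
    qed
  qed
  have mem: "Rop G \<alpha> I s c \<in> finite_sum_ops G \<alpha>"
  proof -
    have f1: "finite (s ` I)" using fin by simp
    have f2: "s ` I \<subseteq> carrier G" using s by blast
    have f3: "\<forall>g\<in>s ` I. continuous_on UNIV (C g)" using Cc by blast
    show ?thesis unfolding finite_sum_ops_def mem_Collect_eq
      by (rule exI[where x="s ` I"], rule exI[where x=C], intro conjI f1 f2 f3 fs)
  qed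
  show ?thesis
    unfolding crossed_product_def
  proof (intro CollectI conjI ballI allI impI)
    fix \<xi> :: "'g \<times> 'x \<Rightarrow> complex" assume "\<xi> \<in> l2 G"
    then show "Rop G \<alpha> I s c \<xi> \<in> l2 G" apply - apply (rule Rop_l2) using G s B by simp_all
  next
    fix e :: real assume "e > 0"
    have "op_norm_le G (\<lambda>\<xi>. Rop G \<alpha> I s c \<xi> - Rop G \<alpha> I s c \<xi>) e"
      unfolding op_norm_le_def using \<open>e > 0\<close> by (simp add: l2norm_zero)
    then show "\<exists>S\<in>finite_sum_ops G \<alpha>. op_norm_le G (\<lambda>\<xi>. Rop G \<alpha> I s c \<xi> - S \<xi>) e"
      using mem by blast
  qed
qed


lemma composite:
  fixes G :: "('g,'b) monoid_scheme" and \<alpha> :: "'g \<Rightarrow> 'x::topological_space \<Rightarrow> 'x"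
  assumes G: "group G" and a: "group_action G \<alpha>"
    and s: "\<And>U. U \<in> I \<Longrightarrow> s U \<in> carrier G"
    and h: "h \<in> carrier G"
  shows "Radj G \<alpha> I s c (mult_op G \<alpha> (\<lambda>y. complex_of_real (f y)) (Rop G \<alpha> J t d \<xi>)) (h, x)
    = (\<Sum>U\<in>I. \<Sum>V\<in>J. complex_of_real (c U (\<alpha> h x) * f (\<alpha> (s U) (\<alpha> h x))
          * d V (\<alpha> (inv\<^bsub>G\<^esub> (t V)) (\<alpha> (s U) (\<alpha> h x)))) * \<xi> (inv\<^bsub>G\<^esub> (t V) \<otimes>\<^bsub>G\<^esub> (s U \<otimes>\<^bsub>G\<^esub> h), x))"
proof -
  let ?\<eta> = "Rop G \<alpha> J t d \<xi>"
  let ?\<zeta> = "mult_op G \<alpha> (\<lambda>y. complex_of_real (f y)) ?\<eta>"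
  have mc: "\<And>u v. u \<in> carrier G \<Longrightarrow> v \<in> carrier G \<Longrightarrow> u \<otimes>\<^bsub>G\<^esub> v \<in> carrier G"
    using G by (simp add: group.is_monoid monoid.m_closed)
  have 1: "Radj G \<alpha> I s c ?\<zeta> (h, x) = (\<Sum>U\<in>I. complex_of_real (c U (\<alpha> h x)) * ?\<zeta> (s U \<otimes>\<^bsub>G\<^esub> h, x))"
    unfolding Radj_def sum_fun_app wshift_def using h by simp
  have 2: "?\<zeta> (s U \<otimes>\<^bsub>G\<^esub> h, x) = complex_of_real (f (\<alpha> (s U) (\<alpha> h x))) * ?\<eta> (s U \<otimes>\<^bsub>G\<^esub> h, x)"
    if U: "U \<in> I" for U
  proof -
    have k: "s U \<otimes>\<^bsub>G\<^esub> h \<in> carrier G" using mc[OF s[OF U] h] .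
    show ?thesis unfolding mult_op_def using k act_mult[OF a s[OF U] h] by simp
  qed
  have 3: "?\<eta> (s U \<otimes>\<^bsub>G\<^esub> h, x) = (\<Sum>V\<in>J. complex_of_real (d V (\<alpha> (inv\<^bsub>G\<^esub> (t V)) (\<alpha> (s U) (\<alpha> h x))))
       * \<xi> (inv\<^bsub>G\<^esub> (t V) \<otimes>\<^bsub>G\<^esub> (s U \<otimes>\<^bsub>G\<^esub> h), x))"
    if U: "U \<in> I" for U
  proof -
    have k: "s U \<otimes>\<^bsub>G\<^esub> h \<in> carrier G" using mc[OF s[OF U] h] .
    show ?thesis unfolding Rop_def sum_fun_app wshift_def using k act_mult[OF a s[OF U] h] by simp
  qed
  have "Radj G \<alpha> I s c ?\<zeta> (h, x) = (\<Sum>U\<in>I. complex_of_real (c U (\<alpha> h x)) *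
      (complex_of_real (f (\<alpha> (s U) (\<alpha> h x))) * (\<Sum>V\<in>J. complex_of_real (d V (\<alpha> (inv\<^bsub>G\<^esub> (t V)) (\<alpha> (s U) (\<alpha> h x))))
       * \<xi> (inv\<^bsub>G\<^esub> (t V) \<otimes>\<^bsub>G\<^esub> (s U \<otimes>\<^bsub>G\<^esub> h), x))))"
    unfolding 1 by (rule sum.cong) (simp_all add: 2 3)
  also have "\<dots> = (\<Sum>U\<in>I. \<Sum>V\<in>J. complex_of_real (c U (\<alpha> h x) * f (\<alpha> (s U) (\<alpha> h x))
          * d V (\<alpha> (inv\<^bsub>G\<^esub> (t V)) (\<alpha> (s U) (\<alpha> h x)))) * \<xi> (inv\<^bsub>G\<^esub> (t V) \<otimes>\<^bsub>G\<^esub> (s U \<otimes>\<^bsub>G\<^esub> h), x))"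
    by (simp add: sum_distrib_left mult.assoc)
  finally show ?thesis .
qed

lemma composite_out:
  assumes "h \<notin> carrier G"
  shows "Radj G \<alpha> I s c \<zeta> (h, x) = 0"
  unfolding Radj_def sum_fun_app wshift_def using assms by simp

lemma l2norm_sq:
  assumes "\<xi> \<in> l2 G" shows "(l2norm \<xi>)\<^sup>2 = infsum (\<lambda>p. (cmod (\<xi> p))\<^sup>2) UNIV"
proof -
  have "infsum (\<lambda>p. (cmod (\<xi> p))\<^sup>2) UNIV \<ge> 0" by (rule infsum_nonneg) simp
  then show ?thesis unfolding l2norm_def by simp
qed

lemma mult_bound:
  assumes \<xi>: "\<xi> \<in> l2 G" and bd: "\<And>p. cmod (\<eta> p) \<le> e * cmod (\<xi> p)" and e: "e \<ge> 0"
    and z: "\<And>h x. h \<notin> carrier G \<Longrightarrow> \<eta> (h, x) = 0"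
  shows "(l2norm \<eta>)\<^sup>2 \<le> e\<^sup>2 * (l2norm \<xi>)\<^sup>2"
proof -
  have \<eta>: "\<eta> \<in> l2 G" by (rule l2_dom[OF \<xi> bd z])
  have s1: "(\<lambda>p. (cmod (\<eta> p))\<^sup>2) summable_on UNIV" using \<eta> by (simp add: l2_def)
  have s0: "(\<lambda>p. (cmod (\<xi> p))\<^sup>2) summable_on UNIV" using \<xi> by (simp add: l2_def)
  have s2: "(\<lambda>p. e\<^sup>2 * (cmod (\<xi> p))\<^sup>2) summable_on UNIV" using s0 by (rule summable_on_cmult_right)
  have le: "(cmod (\<eta> p))\<^sup>2 \<le> e\<^sup>2 * (cmod (\<xi> p))\<^sup>2" for p
  proof -
    have "(cmod (\<eta> p))\<^sup>2 \<le> (e * cmod (\<xi> p))\<^sup>2" using bd[of p] by (simp add: power_mono)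
    then show ?thesis by (simp add: power_mult_distrib)
  qed
  have "(l2norm \<eta>)\<^sup>2 = infsum (\<lambda>p. (cmod (\<eta> p))\<^sup>2) UNIV" by (rule l2norm_sq[OF \<eta>])
  also have "\<dots> \<le> infsum (\<lambda>p. e\<^sup>2 * (cmod (\<xi> p))\<^sup>2) UNIV"
    by (rule infsum_mono[OF s1 s2 le])
  also have "\<dots> = e\<^sup>2 * infsum (\<lambda>p. (cmod (\<xi> p))\<^sup>2) UNIV"
    by (rule infsum_cmult_right) (use s0 in simp)
  also have "\<dots> = e\<^sup>2 * (l2norm \<xi>)\<^sup>2" by (simp add: l2norm_sq[OF \<xi>])
  finally show ?thesis .
qed


lemma normal_euclidean:
  assumes K: "compact (UNIV :: 'x::t2_space set)"
  shows "normal_space (euclidean :: 'x topology)"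
proof -
  have c: "compact_space (euclidean :: 'x topology)"
    unfolding compact_space_def using K by simp
  have h: "Hausdorff_space (euclidean :: 'x topology)"
    unfolding Hausdorff_space_def disjnt_def open_openin[symmetric]
    using hausdorff by blast
  show ?thesis using compact_Hausdorff_or_regular_imp_normal_space[OF c] h by blast
qed

lemma bump:
  fixes y :: "'x::t2_space"
  assumes K: "compact (UNIV :: 'x set)" and U: "open U" and y: "y \<in> U"
  shows "\<exists>\<psi>::'x \<Rightarrow> real. continuous_on UNIV \<psi> \<and> \<psi> y = 1 \<and> (\<forall>z. 0 \<le> \<psi> z) \<and> (\<forall>z. z \<notin> U \<longrightarrow> \<psi> z = 0)"
proof -
  have n: "normal_space (euclidean :: 'x topology)" by (rule normal_euclidean[OF K])
  have c1: "closedin euclidean {y}" using closed_closedin closed_singleton by blast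
  have c2: "closedin euclidean (- U)" using closed_closedin U by (simp add: closed_Compl)
  have d: "disjnt {y} (- U)" using y by (simp add: disjnt_def)
  obtain f :: "'x \<Rightarrow> real" where f: "continuous_map euclidean euclideanreal f" "f ` {y} \<subseteq> {1}" "f ` (- U) \<subseteq> {0}"
    using Urysohn_lemma_alt[OF n c1 c2 d, of 1 0] by blast
  have fc: "continuous_on UNIV f" using f(1) by simp
  show ?thesis
  proof (intro exI[where x="\<lambda>z. max 0 (f z)"] conjI allI impI)
    show "continuous_on UNIV (\<lambda>z. max 0 (f z))"
      by (intro continuous_on_max continuous_on_const fc)
    show "max 0 (f y) = 1" using f(2) by simp
    fix z
    show "0 \<le> max 0 (f z)" by simp
    assume "z \<notin> U"
    then show "max 0 (f z) = 0" using f(3) by auto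
  qed
qed

lemma pou:
  fixes F :: "'x::t2_space set" and UU :: "'x set set"
  assumes K: "compact (UNIV :: 'x set)" and F: "closed F" and fin: "finite UU"
    and op: "\<forall>U\<in>UU. open U" and cov: "F \<subseteq> \<Union>UU"
  shows "\<exists>\<phi>::'x set \<Rightarrow> 'x \<Rightarrow> real. (\<forall>U\<in>UU. continuous_on UNIV (\<phi> U)) \<and> (\<forall>U\<in>UU. \<forall>y. 0 \<le> \<phi> U y)
           \<and> (\<forall>U\<in>UU. \<forall>y. \<phi> U y \<noteq> 0 \<longrightarrow> y \<in> U) \<and> (\<forall>y\<in>F. (\<Sum>U\<in>UU. \<phi> U y) = 1)"
proof -
  have "\<forall>y\<in>F. \<exists>p::'x set \<times> ('x \<Rightarrow> real). fst p \<in> UU \<and> continuous_on UNIV (snd p) \<and> snd p y = 1 \<and> (\<forall>z. 0 \<le> snd p z)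
           \<and> (\<forall>z. z \<notin> fst p \<longrightarrow> snd p z = 0)"
  proof
    fix y assume "y \<in> F"
    then obtain U where U: "U \<in> UU" "y \<in> U" using cov by blast
    have oU: "open U" using op U(1) by blast
    obtain \<psi> :: "'x \<Rightarrow> real" where p\<psi>: "continuous_on UNIV \<psi> \<and> \<psi> y = 1 \<and> (\<forall>z. 0 \<le> \<psi> z) \<and> (\<forall>z. z \<notin> U \<longrightarrow> \<psi> z = 0)"
      using bump[OF K oU U(2)] by blast
    have "fst (U, \<psi>) \<in> UU \<and> continuous_on UNIV (snd (U, \<psi>)) \<and> snd (U, \<psi>) y = 1 \<and> (\<forall>z. 0 \<le> snd (U, \<psi>) z)
           \<and> (\<forall>z. z \<notin> fst (U, \<psi>) \<longrightarrow> snd (U, \<psi>) z = 0)" using p\<psi> U(1) by simp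
    then show "\<exists>p::'x set \<times> ('x \<Rightarrow> real). fst p \<in> UU \<and> continuous_on UNIV (snd p) \<and> snd p y = 1 \<and> (\<forall>z. 0 \<le> snd p z)
           \<and> (\<forall>z. z \<notin> fst p \<longrightarrow> snd p z = 0)"
      by (rule exI)
  qed
  then have "\<exists>q::'x \<Rightarrow> 'x set \<times> ('x \<Rightarrow> real). \<forall>y\<in>F. fst (q y) \<in> UU \<and> continuous_on UNIV (snd (q y)) \<and> snd (q y) y = 1
       \<and> (\<forall>z. 0 \<le> snd (q y) z) \<and> (\<forall>z. z \<notin> fst (q y) \<longrightarrow> snd (q y) z = 0)"
    by (rule bchoice)
  then obtain q :: "'x \<Rightarrow> 'x set \<times> ('x \<Rightarrow> real)" where q: "\<forall>y\<in>F. fst (q y) \<in> UU \<and> continuous_on UNIV (snd (q y)) \<and> snd (q y) y = 1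
       \<and> (\<forall>z. 0 \<le> snd (q y) z) \<and> (\<forall>z. z \<notin> fst (q y) \<longrightarrow> snd (q y) z = 0)" ..
  define Up where "Up y = fst (q y)" for y
  define ps where "ps y = snd (q y)" for y
  have qy: "Up y \<in> UU \<and> continuous_on UNIV (ps y) \<and> ps y y = 1 \<and> (\<forall>z. 0 \<le> ps y z) \<and> (\<forall>z. z \<notin> Up y \<longrightarrow> ps y z = 0)"
    if "y \<in> F" for y
    unfolding Up_def ps_def using q that by (rule bspec)
  have Up: "\<And>y. y \<in> F \<Longrightarrow> Up y \<in> UU" using qy by blast
  have psc: "\<And>y. y \<in> F \<Longrightarrow> continuous_on UNIV (ps y)" using qy by blast
  have ps1: "\<And>y. y \<in> F \<Longrightarrow> ps y y = 1" using qy by blast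
  have ps0: "\<And>y z. y \<in> F \<Longrightarrow> 0 \<le> ps y z" using qy by blast
  have psU: "\<And>y z. y \<in> F \<Longrightarrow> z \<notin> Up y \<Longrightarrow> ps y z = 0" using qy by blast
  have cF: "compact F" using compact_Int_closed[OF K F] by simp
  have opn: "\<And>y. y \<in> F \<Longrightarrow> open ((\<lambda>y. {z. 1/2 < ps y z}) y)"
  proof -
    fix y assume "y \<in> F"
    then have "continuous_on UNIV (ps y)" by (rule psc)
    then have "open {z. (\<lambda>_. 1/2) z < ps y z}" by (intro open_Collect_less continuous_on_const)
    then show "open ((\<lambda>y. {z. 1/2 < ps y z}) y)" by simp
  qed
  have covF: "F \<subseteq> (\<Union>y\<in>F. (\<lambda>y. {z. 1/2 < ps y z}) y)"
  proof
    fix z assume z: "z \<in> F"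
    then have "z \<in> (\<lambda>y. {z. 1/2 < ps y z}) z" by (simp add: ps1)
    then show "z \<in> (\<Union>y\<in>F. (\<lambda>y. {z. 1/2 < ps y z}) y)" using z by (rule UN_I[rotated])
  qed
  obtain Z where Z: "Z \<subseteq> F" "finite Z" "F \<subseteq> (\<Union>y\<in>Z. {z. 1/2 < ps y z})"
    by (rule compactE_image[OF cF opn covF]) simp
  define Ps where "Ps U z = (\<Sum>y\<in>{y \<in> Z. Up y = U}. ps y z)" for U z
  define S where "S z = (\<Sum>y\<in>Z. ps y z)" for z
  define \<phi> where "\<phi> U z = Ps U z / max (S z) (1/2)" for U z
  have Sc: "continuous_on UNIV S" unfolding S_def
    by (intro continuous_on_sum) (use Z(1) psc in blast)
  have Psc: "continuous_on UNIV (Ps U)" for U unfolding Ps_def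
    by (intro continuous_on_sum) (use Z(1) psc in blast)
  have mx: "\<And>z. max (S z) (1/2::real) \<noteq> 0"
  proof -
    fix z
    have "1/2 \<le> max (S z) (1/2::real)" by (rule max.cobounded2)
    then show "max (S z) (1/2::real) \<noteq> 0" by linarith
  qed
  have Ps0: "0 \<le> Ps U z" for U z unfolding Ps_def by (intro sum_nonneg) (use Z(1) ps0 in blast)
  have sumPs: "(\<Sum>U\<in>UU. Ps U z) = S z" for z
    unfolding Ps_def S_def
  proof (rule sum.group)
    show "finite Z" by (rule Z(2))
    show "finite UU" by (rule fin)
    show "Up ` Z \<subseteq> UU" using Z(1) Up by blast
  qed
  show ?thesis
  proof (intro exI[where x=\<phi>] conjI ballI allI impI)
    fix U assume "U \<in> UU"
    show "continuous_on UNIV (\<phi> U)" unfolding \<phi>_def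
      by (intro continuous_on_divide Psc continuous_on_max Sc continuous_on_const) (use mx in blast)
  next
    fix U y assume "U \<in> UU"
    show "0 \<le> \<phi> U y" unfolding \<phi>_def using Ps0[of U y] by simp
  next
    fix U y assume U: "U \<in> UU" and ne: "\<phi> U y \<noteq> 0"
    have "Ps U y / max (S y) (1/2) \<noteq> 0" using ne unfolding \<phi>_def by assumption
    then have P: "Ps U y \<noteq> 0" by (metis div_0)
    have "\<not> (\<forall>w\<in>{w \<in> Z. Up w = U}. ps w y = 0)"
    proof
      assume "\<forall>w\<in>{w \<in> Z. Up w = U}. ps w y = 0"
      then have "Ps U y = 0" unfolding Ps_def by (rule sum.neutral)
      with P show False by simp
    qed
    then have "\<exists>w\<in>{w \<in> Z. Up w = U}. ps w y \<noteq> 0" by blast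
    then obtain w where w: "w \<in> Z" "Up w = U" "ps w y \<noteq> 0" by blast
    have "w \<in> F" using w(1) Z(1) by blast
    then show "y \<in> U" using psU w(2,3) by blast
  next
    fix y assume y: "y \<in> F"
    then obtain w where w: "w \<in> Z" "1/2 < ps w y" using Z(3) by blast
    have "ps w y \<le> S y" unfolding S_def
    proof (rule member_le_sum)
      show "w \<in> Z" by (rule w(1))
      show "finite Z" by (rule Z(2))
      fix v assume "v \<in> Z - {w}"
      then have "v \<in> F" using Z(1) by blast
      then show "0 \<le> ps v y" by (rule ps0)
    qed
    then have Sy: "S y > 1/2" using w by simp
    have "(\<Sum>U\<in>UU. \<phi> U y) = (\<Sum>U\<in>UU. Ps U y) / S y"
      unfolding \<phi>_def using Sy by (simp add: sum_divide_distrib)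
    also have "\<dots> = 1" using sumPs Sy by simp
    finally show "(\<Sum>U\<in>UU. \<phi> U y) = 1" .
  qed
qed


lemma side:
  fixes G :: "('g,'b) monoid_scheme" and \<alpha> :: "'g \<Rightarrow> 'x::t2_space \<Rightarrow> 'x" and f :: "'x \<Rightarrow> real"
  assumes G: "group G" and a: "group_action G \<alpha>" and K: "compact (UNIV :: 'x set)"
    and fc: "continuous_on UNIV f" and e: "0 < e"
    and fin: "finite UU" and op: "\<forall>U\<in>UU. open U" and cov: "{y. e \<le> f y} \<subseteq> \<Union>UU"
    and s: "\<forall>U\<in>UU. s U \<in> carrier G \<and> \<alpha> (s U) ` U \<subseteq> Ot"
    and O: "Ot \<subseteq> {y. e/2 < f y}"
  shows "\<exists>c. (\<forall>U\<in>UU. continuous_on UNIV (c U)) \<and> (\<forall>U\<in>UU. \<forall>z. c U z \<noteq> 0 \<longrightarrow> z \<in> U)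
     \<and> (\<forall>z. (\<Sum>U\<in>UU. (c U z)\<^sup>2 * f (\<alpha> (s U) z)) = max (f z - e) 0)"
proof -
  have Fc: "closed {y. e \<le> f y}" by (intro closed_Collect_le continuous_on_const fc)
  obtain \<phi> :: "'x set \<Rightarrow> 'x \<Rightarrow> real" where
    \<phi>c: "\<forall>U\<in>UU. continuous_on UNIV (\<phi> U)" and \<phi>0: "\<forall>U\<in>UU. \<forall>y. 0 \<le> \<phi> U y"
    and \<phi>U: "\<forall>U\<in>UU. \<forall>y. \<phi> U y \<noteq> 0 \<longrightarrow> y \<in> U" and \<phi>1: "\<forall>y\<in>{y. e \<le> f y}. (\<Sum>U\<in>UU. \<phi> U y) = 1"
    using pou[OF K Fc fin op cov] by blast
  define c where "c U z = sqrt (\<phi> U z * max (f z - e) 0 / max (f (\<alpha> (s U) z)) (e/2))" for U z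
  have mx: "\<And>z. max (f z) (e/2) > 0" using e by (simp add: less_max_iff_disj)
  show ?thesis
  proof (intro exI[where x=c] conjI ballI allI impI)
    fix U assume U: "U \<in> UU"
    have sU: "s U \<in> carrier G" using s U by blast
    have fa: "continuous_on UNIV (\<lambda>z. f (\<alpha> (s U) z))"
      by (rule continuous_on_compose2[OF fc act_cont[OF a sU]]) simp
    have mx2: "\<forall>z\<in>UNIV. max (f (\<alpha> (s U) z)) (e/2) \<noteq> 0" using mx by (metis less_irrefl)
    show "continuous_on UNIV (c U)" unfolding c_def
      by (intro continuous_on_real_sqrt continuous_on_divide continuous_on_mult continuous_on_max
          continuous_on_diff continuous_on_const fc fa mx2 \<phi>c[rule_format, OF U])
  next
    fix U z assume U: "U \<in> UU" and ne: "c U z \<noteq> 0"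
    have "\<phi> U z \<noteq> 0"
    proof
      assume "\<phi> U z = 0"
      then have "c U z = 0" unfolding c_def by simp
      with ne show False by simp
    qed
    then show "z \<in> U" using \<phi>U U by blast
  next
    fix z
    have trm: "(c U z)\<^sup>2 * f (\<alpha> (s U) z) = \<phi> U z * max (f z - e) 0" if U: "U \<in> UU" for U
    proof (cases "\<phi> U z = 0")
      case True
      then show ?thesis unfolding c_def by simp
    next
      case False
      then have "z \<in> U" using \<phi>U U by blast
      then have "\<alpha> (s U) z \<in> Ot" using s U by blast
      then have gt: "e/2 < f (\<alpha> (s U) z)" using O by blast
      then have m: "max (f (\<alpha> (s U) z)) (e/2) = f (\<alpha> (s U) z)" by simp
      have nn: "0 \<le> \<phi> U z * max (f z - e) 0 / max (f (\<alpha> (s U) z)) (e/2)"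
        using \<phi>0 U mx[of "\<alpha> (s U) z"] by simp
      have "(c U z)\<^sup>2 = \<phi> U z * max (f z - e) 0 / f (\<alpha> (s U) z)"
        unfolding c_def using nn m by simp
      then show ?thesis using gt e by simp
    qed
    have "(\<Sum>U\<in>UU. (c U z)\<^sup>2 * f (\<alpha> (s U) z)) = (\<Sum>U\<in>UU. \<phi> U z * max (f z - e) 0)"
      by (rule sum.cong) (simp_all add: trm)
    also have "\<dots> = (\<Sum>U\<in>UU. \<phi> U z) * max (f z - e) 0" by (simp add: sum_distrib_right)
    also have "\<dots> = max (f z - e) 0"
    proof (cases "e \<le> f z")
      case True
      then show ?thesis using \<phi>1 by simp
    next
      case False
      then show ?thesis by simp
    qed
    finally show "(\<Sum>U\<in>UU. (c U z)\<^sup>2 * f (\<alpha> (s U) z)) = max (f z - e) 0" .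
  qed
qed

lemma diag:
  fixes G :: "('g,'b) monoid_scheme" and \<alpha> :: "'g \<Rightarrow> 'x::topological_space \<Rightarrow> 'x"
  assumes G: "group G" and a: "group_action G \<alpha>"
    and s: "\<And>U. U \<in> I \<Longrightarrow> s U \<in> carrier G"
    and dj: "\<And>U V. U \<in> I \<Longrightarrow> V \<in> I \<Longrightarrow> U \<noteq> V \<Longrightarrow> \<alpha> (s U) ` U \<inter> \<alpha> (s V) ` V = {}"
    and supp: "\<And>U z. U \<in> I \<Longrightarrow> c U z \<noteq> 0 \<Longrightarrow> z \<in> U"
    and h: "h \<in> carrier G" and fin: "finite I"
  shows "Radj G \<alpha> I s c (mult_op G \<alpha> (\<lambda>y. complex_of_real (f y)) (Rop G \<alpha> I s c \<xi>)) (h, x)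
     = complex_of_real (\<Sum>U\<in>I. (c U (\<alpha> h x))\<^sup>2 * f (\<alpha> (s U) (\<alpha> h x))) * \<xi> (h, x)"
proof -
  let ?z = "\<alpha> h x"
  let ?T = "\<lambda>U V. complex_of_real (c U ?z * f (\<alpha> (s U) ?z) * c V (\<alpha> (inv\<^bsub>G\<^esub> (s V)) (\<alpha> (s U) ?z)))
      * \<xi> (inv\<^bsub>G\<^esub> (s V) \<otimes>\<^bsub>G\<^esub> (s U \<otimes>\<^bsub>G\<^esub> h), x)"
  have zero: "?T U V = 0" if U: "U \<in> I" and V: "V \<in> I" and UV: "U \<noteq> V" for U V
  proof (cases "c U ?z = 0")
    case False
    then have "?z \<in> U" using supp U by blast
    then have y1: "\<alpha> (s U) ?z \<in> \<alpha> (s U) ` U" by blast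
    have "c V (\<alpha> (inv\<^bsub>G\<^esub> (s V)) (\<alpha> (s U) ?z)) = 0"
    proof (rule ccontr)
      assume "c V (\<alpha> (inv\<^bsub>G\<^esub> (s V)) (\<alpha> (s U) ?z)) \<noteq> 0"
      then have "\<alpha> (inv\<^bsub>G\<^esub> (s V)) (\<alpha> (s U) ?z) \<in> V" using supp V by blast
      then have "\<alpha> (s V) (\<alpha> (inv\<^bsub>G\<^esub> (s V)) (\<alpha> (s U) ?z)) \<in> \<alpha> (s V) ` V" by blast
      then have "\<alpha> (s U) ?z \<in> \<alpha> (s V) ` V" using act_inv2[OF G a s[OF V]] by simp
      then show False using y1 dj[OF U V UV] by blast
    qed
    then show ?thesis by simp
  qed simp
  have same: "?T U U = complex_of_real ((c U ?z)\<^sup>2 * f (\<alpha> (s U) ?z)) * \<xi> (h, x)" if U: "U \<in> I" for U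
  proof -
    have "\<alpha> (inv\<^bsub>G\<^esub> (s U)) (\<alpha> (s U) ?z) = ?z" using act_inv1[OF G a s[OF U]] .
    moreover have "inv\<^bsub>G\<^esub> (s U) \<otimes>\<^bsub>G\<^esub> (s U \<otimes>\<^bsub>G\<^esub> h) = h" using gcancel1[OF G s[OF U] h] .
    ultimately show ?thesis by (simp add: power2_eq_square mult_ac)
  qed
  have "Radj G \<alpha> I s c (mult_op G \<alpha> (\<lambda>y. complex_of_real (f y)) (Rop G \<alpha> I s c \<xi>)) (h, x)
      = (\<Sum>U\<in>I. \<Sum>V\<in>I. ?T U V)"
    by (rule composite[OF G a s h])
  also have "\<dots> = (\<Sum>U\<in>I. \<Sum>V\<in>I. if V = U then ?T U U else 0)"
    by (intro sum.cong refl) (use zero in auto)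
  also have "\<dots> = (\<Sum>U\<in>I. ?T U U)"
    by (rule sum.cong) (simp_all add: sum.delta[OF fin])
  also have "\<dots> = (\<Sum>U\<in>I. complex_of_real ((c U ?z)\<^sup>2 * f (\<alpha> (s U) ?z)) * \<xi> (h, x))"
    by (rule sum.cong[OF refl]) (rule same)
  also have "\<dots> = complex_of_real (\<Sum>U\<in>I. (c U ?z)\<^sup>2 * f (\<alpha> (s U) ?z)) * \<xi> (h, x)"
    by (simp add: sum_distrib_right)
  finally show ?thesis .
qed

lemma cross:
  fixes G :: "('g,'b) monoid_scheme" and \<alpha> :: "'g \<Rightarrow> 'x::topological_space \<Rightarrow> 'x"
  assumes G: "group G" and a: "group_action G \<alpha>"
    and s: "\<And>U. U \<in> I \<Longrightarrow> s U \<in> carrier G"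
    and t: "\<And>V. V \<in> J \<Longrightarrow> t V \<in> carrier G"
    and sO: "\<And>U. U \<in> I \<Longrightarrow> \<alpha> (s U) ` U \<subseteq> O1"
    and tO: "\<And>V. V \<in> J \<Longrightarrow> \<alpha> (t V) ` V \<subseteq> O2"
    and dj: "O1 \<inter> O2 = {}"
    and suppc: "\<And>U z. U \<in> I \<Longrightarrow> c U z \<noteq> 0 \<Longrightarrow> z \<in> U"
    and suppd: "\<And>V z. V \<in> J \<Longrightarrow> d V z \<noteq> 0 \<Longrightarrow> z \<in> V"
  shows "Radj G \<alpha> I s c (mult_op G \<alpha> (\<lambda>y. complex_of_real (f y)) (Rop G \<alpha> J t d \<xi>)) (h, x) = 0"
proof (cases "h \<in> carrier G")
  case False
  then show ?thesis by (rule composite_out)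
next
  case h: True
  let ?z = "\<alpha> h x"
  have zero: "c U ?z * f (\<alpha> (s U) ?z) * d V (\<alpha> (inv\<^bsub>G\<^esub> (t V)) (\<alpha> (s U) ?z)) = 0"
    if U: "U \<in> I" and V: "V \<in> J" for U V
  proof (cases "c U ?z = 0")
    case False
    then have "?z \<in> U" using suppc U by blast
    then have y1: "\<alpha> (s U) ?z \<in> O1" using sO[OF U] by blast
    have "d V (\<alpha> (inv\<^bsub>G\<^esub> (t V)) (\<alpha> (s U) ?z)) = 0"
    proof (rule ccontr)
      assume "d V (\<alpha> (inv\<^bsub>G\<^esub> (t V)) (\<alpha> (s U) ?z)) \<noteq> 0"
      then have "\<alpha> (inv\<^bsub>G\<^esub> (t V)) (\<alpha> (s U) ?z) \<in> V" using suppd V by blast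
      then have "\<alpha> (t V) (\<alpha> (inv\<^bsub>G\<^esub> (t V)) (\<alpha> (s U) ?z)) \<in> O2" using tO[OF V] by blast
      then have "\<alpha> (s U) ?z \<in> O2" using act_inv2[OF G a t[OF V]] by simp
      then show False using y1 dj by blast
    qed
    then show ?thesis by simp
  qed simp
  have "Radj G \<alpha> I s c (mult_op G \<alpha> (\<lambda>y. complex_of_real (f y)) (Rop G \<alpha> J t d \<xi>)) (h, x)
    = (\<Sum>U\<in>I. \<Sum>V\<in>J. complex_of_real (c U (\<alpha> h x) * f (\<alpha> (s U) (\<alpha> h x))
          * d V (\<alpha> (inv\<^bsub>G\<^esub> (t V)) (\<alpha> (s U) (\<alpha> h x)))) * \<xi> (inv\<^bsub>G\<^esub> (t V) \<otimes>\<^bsub>G\<^esub> (s U \<otimes>\<^bsub>G\<^esub> h), x))"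
    by (rule composite[OF G a s h])
  also have "\<dots> = 0"
  proof (rule sum.neutral, rule ballI, rule sum.neutral, rule ballI)
    fix U V assume "U \<in> I" "V \<in> J"
    then show "complex_of_real (c U (\<alpha> h x) * f (\<alpha> (s U) (\<alpha> h x))
          * d V (\<alpha> (inv\<^bsub>G\<^esub> (t V)) (\<alpha> (s U) (\<alpha> h x)))) * \<xi> (inv\<^bsub>G\<^esub> (t V) \<otimes>\<^bsub>G\<^esub> (s U \<otimes>\<^bsub>G\<^esub> h), x) = 0"
      using zero by simp
  qed
  finally show ?thesis .
qed


lemma m2_mono:
  assumes "m2_norm_le G a b c d e" "e \<le> e'"
  shows "m2_norm_le G a b c d e'"
  using assms unfolding m2_norm_le_def by (meson order_trans)

lemma key:
  fixes G :: "('g,'b) monoid_scheme" and \<alpha> :: "'g \<Rightarrow> 'x::t2_space \<Rightarrow> 'x" and f :: "'x \<Rightarrow> real"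
  assumes G: "group G" and K: "compact (UNIV :: 'x set)" and a: "group_action G \<alpha>"
    and pc: "paradoxical_comparison G \<alpha>"
    and fc: "continuous_on UNIV f" and fnn: "\<forall>x. 0 \<le> f x" and e: "0 < e" and x0: "e/2 < f x0"
  shows "\<exists>r1 r2 r1' r2'. (r1 \<in> crossed_product G \<alpha> \<and> r2 \<in> crossed_product G \<alpha> \<and>
             is_adjoint G r1 r1' \<and> is_adjoint G r2 r2') \<and>
         m2_norm_le G
            (\<lambda>\<xi>. r1' (mult_op G \<alpha> (\<lambda>x. complex_of_real (f x)) (r1 \<xi>)) - mult_op G \<alpha> (\<lambda>x. complex_of_real (f x)) \<xi>)
            (\<lambda>\<xi>. r1' (mult_op G \<alpha> (\<lambda>x. complex_of_real (f x)) (r2 \<xi>)))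
            (\<lambda>\<xi>. r2' (mult_op G \<alpha> (\<lambda>x. complex_of_real (f x)) (r1 \<xi>)))
            (\<lambda>\<xi>. r2' (mult_op G \<alpha> (\<lambda>x. complex_of_real (f x)) (r2 \<xi>)) - mult_op G \<alpha> (\<lambda>x. complex_of_real (f x)) \<xi>) e"
proof -
  let ?b = "mult_op G \<alpha> (\<lambda>x. complex_of_real (f x))"
  define W where "W = {y. e/2 < f y}"
  define F where "F = {y. e \<le> f y}"
  have oW: "open W"
  proof -
    have "open {y. (\<lambda>_. e/2) y < f y}" by (intro open_Collect_less continuous_on_const fc)
    then show ?thesis unfolding W_def by simp
  qed
  have cF: "closed F" unfolding F_def by (intro closed_Collect_le continuous_on_const fc)
  have FW: "F \<subseteq> W" unfolding F_def W_def using e by auto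
  have Wne: "W \<noteq> {}" unfolding W_def using x0 by blast
  obtain O1 O2 where O: "open O1" "open O2" "O1 \<noteq> {}" "O2 \<noteq> {}" "O1 \<subseteq> W" "O2 \<subseteq> W"
      "O1 \<inter> O2 = {}" "subequiv G \<alpha> F O1" "subequiv G \<alpha> F O2"
  proof -
    have pW: "open W \<and> W \<noteq> {} \<and> closed F \<and> F \<subseteq> W" using oW Wne cF FW by simp
    have pcd: "\<forall>W F. open W \<and> W \<noteq> {} \<and> closed F \<and> F \<subseteq> W \<longrightarrow>
        (\<exists>O1 O2. open O1 \<and> open O2 \<and> O1 \<noteq> {} \<and> O2 \<noteq> {} \<and> O1 \<subseteq> W \<and> O2 \<subseteq> W \<and>
           O1 \<inter> O2 = {} \<and> subequiv G \<alpha> F O1 \<and> subequiv G \<alpha> F O2)"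
      using pc unfolding paradoxical_comparison_def .
    have "\<exists>O1 O2. open O1 \<and> open O2 \<and> O1 \<noteq> {} \<and> O2 \<noteq> {} \<and> O1 \<subseteq> W \<and> O2 \<subseteq> W \<and>
           O1 \<inter> O2 = {} \<and> subequiv G \<alpha> F O1 \<and> subequiv G \<alpha> F O2"
      by (rule mp[OF spec[OF spec[OF pcd, of W], of F] pW])
    then show ?thesis using that by iprover
  qed
  obtain UU s where UU: "finite UU" "\<forall>U\<in>UU. open U" "F \<subseteq> \<Union>UU"
      "\<forall>U\<in>UU. s U \<in> carrier G \<and> \<alpha> (s U) ` U \<subseteq> O1"
      "\<forall>U\<in>UU. \<forall>V\<in>UU. U \<noteq> V \<longrightarrow> \<alpha> (s U) ` U \<inter> \<alpha> (s V) ` V = {}"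
    using O(8) unfolding subequiv_def by iprover
  obtain VV t where VV: "finite VV" "\<forall>U\<in>VV. open U" "F \<subseteq> \<Union>VV"
      "\<forall>U\<in>VV. t U \<in> carrier G \<and> \<alpha> (t U) ` U \<subseteq> O2"
      "\<forall>U\<in>VV. \<forall>V\<in>VV. U \<noteq> V \<longrightarrow> \<alpha> (t U) ` U \<inter> \<alpha> (t V) ` V = {}"
    using O(9) unfolding subequiv_def by iprover
  have O1W: "O1 \<subseteq> {y. e/2 < f y}" using O(5) unfolding W_def .
  have O2W: "O2 \<subseteq> {y. e/2 < f y}" using O(6) unfolding W_def .
  obtain c where c: "\<forall>U\<in>UU. continuous_on UNIV (c U)" "\<forall>U\<in>UU. \<forall>z. c U z \<noteq> 0 \<longrightarrow> z \<in> U"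
     "\<forall>z. (\<Sum>U\<in>UU. (c U z)\<^sup>2 * f (\<alpha> (s U) z)) = max (f z - e) 0"
    using side[OF G a K fc e UU(1) UU(2) UU(3)[unfolded F_def] UU(4) O1W] by iprover
  obtain d where d: "\<forall>U\<in>VV. continuous_on UNIV (d U)" "\<forall>U\<in>VV. \<forall>z. d U z \<noteq> 0 \<longrightarrow> z \<in> U"
     "\<forall>z. (\<Sum>U\<in>VV. (d U z)\<^sup>2 * f (\<alpha> (t U) z)) = max (f z - e) 0"
    using side[OF G a K fc e VV(1) VV(2) VV(3)[unfolded F_def] VV(4) O2W] by iprover
  have sC: "\<And>U. U \<in> UU \<Longrightarrow> s U \<in> carrier G" using UU(4) by blast
  have tC: "\<And>U. U \<in> VV \<Longrightarrow> t U \<in> carrier G" using VV(4) by blast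
  have sO: "\<And>U. U \<in> UU \<Longrightarrow> \<alpha> (s U) ` U \<subseteq> O1" using UU(4) by blast
  have tO: "\<And>U. U \<in> VV \<Longrightarrow> \<alpha> (t U) ` U \<subseteq> O2" using VV(4) by blast
  have cc: "\<And>U. U \<in> UU \<Longrightarrow> continuous_on UNIV (c U)" using c(1) by blast
  have dc: "\<And>U. U \<in> VV \<Longrightarrow> continuous_on UNIV (d U)" using d(1) by blast
  have cs: "\<And>U z. U \<in> UU \<Longrightarrow> c U z \<noteq> 0 \<Longrightarrow> z \<in> U" using c(2) by blast
  have ds: "\<And>U z. U \<in> VV \<Longrightarrow> d U z \<noteq> 0 \<Longrightarrow> z \<in> U" using d(2) by blast
  have sdj: "\<And>U V. U \<in> UU \<Longrightarrow> V \<in> UU \<Longrightarrow> U \<noteq> V \<Longrightarrow> \<alpha> (s U) ` U \<inter> \<alpha> (s V) ` V = {}"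
    using UU(5) by blast
  have tdj: "\<And>U V. U \<in> VV \<Longrightarrow> V \<in> VV \<Longrightarrow> U \<noteq> V \<Longrightarrow> \<alpha> (t U) ` U \<inter> \<alpha> (t V) ` V = {}"
    using VV(5) by blast
  have cB: "\<And>U. U \<in> UU \<Longrightarrow> \<exists>B. \<forall>z. \<bar>c U z\<bar> \<le> B" using cont_bounded[OF K] cc by blast
  have dB: "\<And>U. U \<in> VV \<Longrightarrow> \<exists>B. \<forall>z. \<bar>d U z\<bar> \<le> B" using cont_bounded[OF K] dc by blast
  define r1 where "r1 = Rop G \<alpha> UU s c"
  define r2 where "r2 = Rop G \<alpha> VV t d"
  define r1' where "r1' = Radj G \<alpha> UU s c"
  define r2' where "r2' = Radj G \<alpha> VV t d"
  have m1: "r1 \<in> crossed_product G \<alpha>" unfolding r1_def by (rule Rop_cp[OF G a UU(1) sC cc K])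
  have m2: "r2 \<in> crossed_product G \<alpha>" unfolding r2_def by (rule Rop_cp[OF G a VV(1) tC dc K])
  have a1: "is_adjoint G r1 r1'" unfolding r1_def r1'_def by (rule Rop_adj[OF G a sC cB])
  have a2: "is_adjoint G r2 r2'" unfolding r2_def r2'_def by (rule Rop_adj[OF G a tC dB])
  define D where "D \<xi> = (\<lambda>(h,x). if h \<in> carrier G then complex_of_real (max (f (\<alpha> h x) - e) 0 - f (\<alpha> h x)) * \<xi> (h, x) else 0)"
    for \<xi> :: "'g \<times> 'x \<Rightarrow> complex"
  have E1: "r1' (?b (r1 \<xi>1)) - ?b \<xi>1 + r1' (?b (r2 \<xi>2)) = D \<xi>1" for \<xi>1 \<xi>2
  proof (rule ext)
    fix p :: "'g \<times> 'x"
    obtain h x where p: "p = (h, x)" by (cases p)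
    show "(r1' (?b (r1 \<xi>1)) - ?b \<xi>1 + r1' (?b (r2 \<xi>2))) p = D \<xi>1 p"
    proof (cases "h \<in> carrier G")
      case True
      have 1: "r1' (?b (r1 \<xi>1)) (h, x) = complex_of_real (max (f (\<alpha> h x) - e) 0) * \<xi>1 (h, x)"
      proof -
        have "r1' (?b (r1 \<xi>1)) (h, x) = complex_of_real (\<Sum>U\<in>UU. (c U (\<alpha> h x))\<^sup>2 * f (\<alpha> (s U) (\<alpha> h x))) * \<xi>1 (h, x)"
          unfolding r1'_def r1_def by (rule diag[OF G a sC sdj cs True UU(1)])
        also have "\<dots> = complex_of_real (max (f (\<alpha> h x) - e) 0) * \<xi>1 (h, x)" using c(3) by simp
        finally show ?thesis .
      qed
      have 2: "r1' (?b (r2 \<xi>2)) (h, x) = 0"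
        unfolding r1'_def r2_def by (rule cross[OF G a sC tC sO tO O(7) cs ds])
      have 3: "?b \<xi>1 (h, x) = complex_of_real (f (\<alpha> h x)) * \<xi>1 (h, x)"
        unfolding mult_op_def using True by simp
      show ?thesis unfolding p D_def using True 1 2 3 by (simp add: algebra_simps)
    next
      case False
      have 1: "r1' \<zeta> (h, x) = 0" for \<zeta> unfolding r1'_def using False by (rule composite_out)
      show ?thesis unfolding p D_def using False 1 by (simp add: mult_op_def)
    qed
  qed
  have E2: "r2' (?b (r1 \<xi>1)) + (r2' (?b (r2 \<xi>2)) - ?b \<xi>2) = D \<xi>2" for \<xi>1 \<xi>2
  proof (rule ext)
    fix p :: "'g \<times> 'x"
    obtain h x where p: "p = (h, x)" by (cases p)
    show "(r2' (?b (r1 \<xi>1)) + (r2' (?b (r2 \<xi>2)) - ?b \<xi>2)) p = D \<xi>2 p"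
    proof (cases "h \<in> carrier G")
      case True
      have 1: "r2' (?b (r2 \<xi>2)) (h, x) = complex_of_real (max (f (\<alpha> h x) - e) 0) * \<xi>2 (h, x)"
      proof -
        have "r2' (?b (r2 \<xi>2)) (h, x) = complex_of_real (\<Sum>U\<in>VV. (d U (\<alpha> h x))\<^sup>2 * f (\<alpha> (t U) (\<alpha> h x))) * \<xi>2 (h, x)"
          unfolding r2'_def r2_def by (rule diag[OF G a tC tdj ds True VV(1)])
        also have "\<dots> = complex_of_real (max (f (\<alpha> h x) - e) 0) * \<xi>2 (h, x)" using d(3) by simp
        finally show ?thesis .
      qed
      have "O2 \<inter> O1 = {}" using O(7) by blast
      then have 2: "r2' (?b (r1 \<xi>1)) (h, x) = 0"
        unfolding r2'_def r1_def by (intro cross[OF G a tC sC tO sO _ ds cs])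
      have 3: "?b \<xi>2 (h, x) = complex_of_real (f (\<alpha> h x)) * \<xi>2 (h, x)"
        unfolding mult_op_def using True by simp
      show ?thesis unfolding p D_def using True 1 2 3 by (simp add: algebra_simps)
    next
      case False
      have 1: "r2' \<zeta> (h, x) = 0" for \<zeta> unfolding r2'_def using False by (rule composite_out)
      show ?thesis unfolding p D_def using False 1 by (simp add: mult_op_def)
    qed
  qed
  have Dbd: "(l2norm (D \<xi>))\<^sup>2 \<le> e\<^sup>2 * (l2norm \<xi>)\<^sup>2" if \<xi>: "\<xi> \<in> l2 G" for \<xi>
  proof (rule mult_bound[OF \<xi> _ less_imp_le[OF e]])
    fix p :: "'g \<times> 'x"
    obtain h x where p: "p = (h, x)" by (cases p)
    have fz: "0 \<le> f (\<alpha> h x)" using fnn by blast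
    have ab: "\<bar>max (f (\<alpha> h x) - e) 0 - f (\<alpha> h x)\<bar> \<le> e" using fz e by (simp add: max_def abs_if)
    show "cmod (D \<xi> p) \<le> e * cmod (\<xi> p)"
    proof (cases "h \<in> carrier G")
      case True
      have "cmod (D \<xi> p) = cmod (complex_of_real (max (f (\<alpha> h x) - e) 0 - f (\<alpha> h x))) * cmod (\<xi> p)"
        unfolding p D_def by (simp only: prod.case if_P[OF True] norm_mult)
      also have "\<dots> \<le> e * cmod (\<xi> p)"
        by (rule mult_right_mono) (simp_all only: norm_of_real ab norm_ge_zero)
      finally show ?thesis .
    next
      case False
      then show ?thesis unfolding p D_def using e by simp
    qed
  next
    fix h x show "h \<notin> carrier G \<Longrightarrow> D \<xi> (h, x) = 0" unfolding D_def by simp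
  qed
  have m2n: "m2_norm_le G
            (\<lambda>\<xi>. r1' (?b (r1 \<xi>)) - ?b \<xi>) (\<lambda>\<xi>. r1' (?b (r2 \<xi>)))
            (\<lambda>\<xi>. r2' (?b (r1 \<xi>))) (\<lambda>\<xi>. r2' (?b (r2 \<xi>)) - ?b \<xi>) e"
    unfolding m2_norm_le_def
  proof (intro ballI impI)
    fix \<xi>1 \<xi>2 :: "'g \<times> 'x \<Rightarrow> complex"
    assume x1: "\<xi>1 \<in> l2 G" and x2: "\<xi>2 \<in> l2 G" and n: "(l2norm \<xi>1)\<^sup>2 + (l2norm \<xi>2)\<^sup>2 \<le> 1"
    have "(l2norm (D \<xi>1))\<^sup>2 + (l2norm (D \<xi>2))\<^sup>2 \<le> e\<^sup>2 * (l2norm \<xi>1)\<^sup>2 + e\<^sup>2 * (l2norm \<xi>2)\<^sup>2"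
      using Dbd[OF x1] Dbd[OF x2] by linarith
    also have "\<dots> = e\<^sup>2 * ((l2norm \<xi>1)\<^sup>2 + (l2norm \<xi>2)\<^sup>2)" by (simp add: algebra_simps)
    also have "\<dots> \<le> e\<^sup>2 * 1" using n by (intro mult_left_mono) simp_all
    finally have le: "(l2norm (D \<xi>1))\<^sup>2 + (l2norm (D \<xi>2))\<^sup>2 \<le> e\<^sup>2" by simp
    have "sqrt ((l2norm (D \<xi>1))\<^sup>2 + (l2norm (D \<xi>2))\<^sup>2) \<le> sqrt (e\<^sup>2)"
      using le by (rule real_sqrt_le_mono)
    also have "\<dots> = e" using e by simp
    finally show "sqrt ((l2norm (r1' (?b (r1 \<xi>1)) - ?b \<xi>1 + r1' (?b (r2 \<xi>2))))\<^sup>2 +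
                  (l2norm (r2' (?b (r1 \<xi>1)) + (r2' (?b (r2 \<xi>2)) - ?b \<xi>2)))\<^sup>2) \<le> e"
      unfolding E1 E2 .
  qed
  show ?thesis
    by (rule exI[where x=r1], rule exI[where x=r2], rule exI[where x=r1'], rule exI[where x=r2'])
       (intro conjI m1 m2 a1 a2 m2n)
qed

theorem proposition4p9:
  fixes G :: "('g, 'b) monoid_scheme" and \<alpha> :: "'g \<Rightarrow> 'x::t2_space \<Rightarrow> 'x"
  assumes "group G" and "countable (carrier G)" and "infinite (carrier G)"
    and "compact (UNIV :: 'x set)" and "infinite (UNIV :: 'x set)"
    and "group_action G \<alpha>" and "paradoxical_comparison G \<alpha>"
  shows "\<forall>f :: 'x \<Rightarrow> real. continuous_on UNIV f \<and> (\<forall>x. 0 \<le> f x) \<and> f \<noteq> (\<lambda>_. 0) \<longrightarrow>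
           cuntz_diag2_below G \<alpha> (mult_op G \<alpha> (\<lambda>x. complex_of_real (f x)))
                                 (mult_op G \<alpha> (\<lambda>x. complex_of_real (f x)))"
proof (intro allI impI, elim conjE)
  fix f :: "'x \<Rightarrow> real"
  assume fc: "continuous_on UNIV f" and fnn: "\<forall>x. 0 \<le> f x" and fne: "f \<noteq> (\<lambda>_. 0)"
  have G: "group G" and K: "compact (UNIV :: 'x set)" and a: "group_action G \<alpha>"
    and pc: "paradoxical_comparison G \<alpha>" using assms by blast+
  let ?b = "mult_op G \<alpha> (\<lambda>x. complex_of_real (f x))"
  obtain x0 where "f x0 \<noteq> 0" using fne by blast
  then have M: "0 < f x0" using fnn by (metis less_eq_real_def)
  define ep where "ep k = f x0 / (real k + 1)" for k :: nat
  have ep0: "0 < ep k" for k unfolding ep_def using M by simp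
  have ep1: "ep k / 2 < f x0" for k
  proof -
    have "ep k \<le> f x0" unfolding ep_def using M by (simp add: divide_le_eq)
    then show ?thesis using M by simp
  qed
  let ?Q = "\<lambda>k r1 r2 r1' r2'. (r1 \<in> crossed_product G \<alpha> \<and> r2 \<in> crossed_product G \<alpha> \<and>
             is_adjoint G r1 r1' \<and> is_adjoint G r2 r2') \<and>
         m2_norm_le G (\<lambda>\<xi>. r1' (?b (r1 \<xi>)) - ?b \<xi>) (\<lambda>\<xi>. r1' (?b (r2 \<xi>)))
            (\<lambda>\<xi>. r2' (?b (r1 \<xi>))) (\<lambda>\<xi>. r2' (?b (r2 \<xi>)) - ?b \<xi>) (ep k)"
  have "\<forall>k. \<exists>r1 r2 r1' r2'. ?Q k r1 r2 r1' r2'"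
  proof
    fix k
    show "\<exists>r1 r2 r1' r2'. ?Q k r1 r2 r1' r2'" by (rule key[OF G K a pc fc fnn ep0 ep1])
  qed
  then have "\<exists>R1. \<forall>k. \<exists>r2 r1' r2'. ?Q k (R1 k) r2 r1' r2'" by (rule choice)
  then obtain R1 where "\<forall>k. \<exists>r2 r1' r2'. ?Q k (R1 k) r2 r1' r2'" ..
  then have "\<exists>R2. \<forall>k. \<exists>r1' r2'. ?Q k (R1 k) (R2 k) r1' r2'" by (rule choice)
  then obtain R2 where "\<forall>k. \<exists>r1' r2'. ?Q k (R1 k) (R2 k) r1' r2'" ..
  then have "\<exists>R1'. \<forall>k. \<exists>r2'. ?Q k (R1 k) (R2 k) (R1' k) r2'" by (rule choice)
  then obtain R1' where "\<forall>k. \<exists>r2'. ?Q k (R1 k) (R2 k) (R1' k) r2'" ..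
  then have "\<exists>R2'. \<forall>k. ?Q k (R1 k) (R2 k) (R1' k) (R2' k)" by (rule choice)
  then obtain R2' where R: "\<forall>k. ?Q k (R1 k) (R2 k) (R1' k) (R2' k)" ..
  show "cuntz_diag2_below G \<alpha> ?b ?b"
    unfolding cuntz_diag2_below_def
  proof (rule exI[where x=R1], rule exI[where x=R2], rule exI[where x=R1'], rule exI[where x=R2'], rule conjI)
    show "\<forall>k. R1 k \<in> crossed_product G \<alpha> \<and> R2 k \<in> crossed_product G \<alpha> \<and>
          is_adjoint G (R1 k) (R1' k) \<and> is_adjoint G (R2 k) (R2' k)"
    proof
      fix k
      show "R1 k \<in> crossed_product G \<alpha> \<and> R2 k \<in> crossed_product G \<alpha> \<and>
          is_adjoint G (R1 k) (R1' k) \<and> is_adjoint G (R2 k) (R2' k)" using spec[OF R, of k] by (rule conjunct1)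
    qed
  next
    show "\<forall>\<epsilon>>0. \<exists>N. \<forall>k\<ge>N. m2_norm_le G (\<lambda>\<xi>. R1' k (?b (R1 k \<xi>)) - ?b \<xi>) (\<lambda>\<xi>. R1' k (?b (R2 k \<xi>)))
            (\<lambda>\<xi>. R2' k (?b (R1 k \<xi>))) (\<lambda>\<xi>. R2' k (?b (R2 k \<xi>)) - ?b \<xi>) \<epsilon>"
    proof (intro allI impI)
    fix \<epsilon> :: real assume \<epsilon>: "\<epsilon> > 0"
    obtain N :: nat where N: "f x0 / \<epsilon> < real N" using reals_Archimedean2 by blast
    have "\<forall>k\<ge>N. m2_norm_le G (\<lambda>\<xi>. R1' k (?b (R1 k \<xi>)) - ?b \<xi>) (\<lambda>\<xi>. R1' k (?b (R2 k \<xi>)))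
            (\<lambda>\<xi>. R2' k (?b (R1 k \<xi>))) (\<lambda>\<xi>. R2' k (?b (R2 k \<xi>)) - ?b \<xi>) \<epsilon>"
    proof (intro allI impI)
      fix k assume k: "N \<le> k"
      have "f x0 / \<epsilon> < real k + 1" using N k by linarith
      then have "f x0 < \<epsilon> * (real k + 1)" using \<epsilon> by (simp add: divide_less_eq mult.commute)
      then have "ep k \<le> \<epsilon>" unfolding ep_def by (simp add: divide_le_eq mult.commute)
      then show "m2_norm_le G (\<lambda>\<xi>. R1' k (?b (R1 k \<xi>)) - ?b \<xi>) (\<lambda>\<xi>. R1' k (?b (R2 k \<xi>)))
            (\<lambda>\<xi>. R2' k (?b (R1 k \<xi>))) (\<lambda>\<xi>. R2' k (?b (R2 k \<xi>)) - ?b \<xi>) \<epsilon>"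
        by (rule m2_mono[OF conjunct2[OF spec[OF R, of k]]])
    qed
    then show "\<exists>N. \<forall>k\<ge>N. m2_norm_le G (\<lambda>\<xi>. R1' k (?b (R1 k \<xi>)) - ?b \<xi>) (\<lambda>\<xi>. R1' k (?b (R2 k \<xi>)))
            (\<lambda>\<xi>. R2' k (?b (R1 k \<xi>))) (\<lambda>\<xi>. R2' k (?b (R2 k \<xi>)) - ?b \<xi>) \<epsilon>" by blast
    qed
  qed
qed

end
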